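(* Let $f$ be a nonconstant meromorphic function on $\mathbb{C}$. Suppose the phase of $f$ is doubly periodic with primitive periods $p_1,p_2$, where $\omega=\frac{p_2}{p_1}\in\mathbb{C}\setminus\mathbb{R}$. Let $L=\mathbb{Z}p_1+\mathbb{Z}p_2$ and let $$\sigma(z)=z\prod_{\lambda\in L\setminus\{0\}}e^{\frac{z}{\lambda}+\frac{z^2}{2\lambda^2}}\left(1-\frac{z}{\lambda}\right)$$ be the Weierstrass sigma-function of $L$. Then there exist an elliptic function $g$ with periods $p_1,p_2$, a number $\xi_0\in\mathbb{C}$, a number $a\in\mathbb{C}$ and integers $m_1,m_2\in\mathbb{Z}$ such that $$f(z)=e^{az}g(z)\frac{\sigma(z)}{\sigma(-\xi_0+z)}$$ and $$\operatorname{Im}(ap_j)=\operatorname{Im}(v_j)+2m_j\pi,\qquad j\in\{1,2\},$$ where $$v_j=-\frac{3\xi_0}{p_j}+\xi_0p_j^2\sum_{\lambda\in L\setminus\{0,-p_j\}}\frac{1}{\lambda(\lambda+p_j)^2}.$$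
   Context: For a function $f$ defined on an open set $D\subset\mathbb{C}$ with values in $\widehat{\mathbb{C}}$, its phase is the function $z\mapsto \frac{f(z)}{|f(z)|}$, defined on $\{z\in D: f(z)\in\widehat{\mathbb{C}}\setminus\{0,\infty\}\}$ with values in the unit circle $\mathbb{T}$. A number $p$ is a period of the phase if $\frac{f(z+p)}{|f(z+p)|}=\frac{f(z)}{|f(z)|}$ whenever both sides are defined; the phase is doubly periodic with primitive periods $p_1,p_2$ if $p_1,p_2$ (linearly independent over $\mathbb{R}$) generate its group of periods. An elliptic function with periods $p_1,p_2$ is a meromorphic function on $\mathbb{C}$ invariant under $z\mapsto z+p_1$ and $z\mapsto z+p_2$. *)

theory Defs
  imports "HOL-Complex_Analysis.Complex_Analysis"
begin

text \<open>A meromorphic function on C with values in the extended plane is represented by a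
  nicely meromorphic function: at a pole z the value is infinity (encoded by is_pole f z),
  elsewhere f is continuous with value f z.\<close>

definition phase_domain :: "(complex \<Rightarrow> complex) \<Rightarrow> complex set" where
  "phase_domain f = {z. \<not> is_pole f z \<and> f z \<noteq> 0}"

definition phase :: "(complex \<Rightarrow> complex) \<Rightarrow> complex \<Rightarrow> complex" where
  "phase f z = f z / complex_of_real (norm (f z))"

definition is_phase_period :: "(complex \<Rightarrow> complex) \<Rightarrow> complex \<Rightarrow> bool" where
  "is_phase_period f p \<longleftrightarrow>
     (\<forall>z. z \<in> phase_domain f \<and> z + p \<in> phase_domain f \<longrightarrow> phase f (z + p) = phase f z)"

definition lattice :: "complex \<Rightarrow> complex \<Rightarrow> complex set" where
  "lattice p1 p2 = {of_int m * p1 + of_int n * p2 | m n. True}"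

text \<open>Phase doubly periodic with primitive periods p1, p2: p1, p2 are R-linearly
  independent and generate the group of all periods of the phase.\<close>
definition phase_doubly_periodic :: "(complex \<Rightarrow> complex) \<Rightarrow> complex \<Rightarrow> complex \<Rightarrow> bool" where
  "phase_doubly_periodic f p1 p2 \<longleftrightarrow>
     p2 / p1 \<notin> \<real> \<and> {p. is_phase_period f p} = lattice p1 p2"

definition elliptic :: "(complex \<Rightarrow> complex) \<Rightarrow> complex \<Rightarrow> complex \<Rightarrow> bool" where
  "elliptic g p1 p2 \<longleftrightarrow> g meromorphic_on UNIV \<and>
     (\<forall>z. g (z + p1) = g z) \<and> (\<forall>z. g (z + p2) = g z)"

text \<open>Weierstrass sigma function; the (absolutely convergent) product over L - {0} is
  taken as the limit of finite partial products along the net of finite subsets.\<close>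
definition weierstrass_sigma :: "complex set \<Rightarrow> complex \<Rightarrow> complex" where
  "weierstrass_sigma L z = z * Lim (finite_subsets_at_top (L - {0}))
     (\<lambda>F. \<Prod>l\<in>F. exp (z / l + z\<^sup>2 / (2 * l\<^sup>2)) * (1 - z / l))"

definition v_term :: "complex set \<Rightarrow> complex \<Rightarrow> complex \<Rightarrow> complex" where
  "v_term L \<xi>0 p = - 3 * \<xi>0 / p +
     \<xi>0 * p\<^sup>2 * (\<Sum>\<^sub>\<infinity>l\<in>L - {0, - p}. 1 / (l * (l + p)\<^sup>2))"

end

theory Submission
  imports Defs
begin

lemma lattice_mem: "x \<in> lattice p1 p2 \<longleftrightarrow> (\<exists>m n. x = of_int m * p1 + of_int n * p2)"
  by (auto simp: lattice_def)

locale lat =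
  fixes p1 p2 :: complex
  assumes indep: "p2 / p1 \<notin> \<real>"
begin

abbreviation "L \<equiv> lattice p1 p2"

lemma p1_nz: "p1 \<noteq> 0" using indep by (metis Reals_0 division_ring_divide_zero)
lemma p2_nz: "p2 \<noteq> 0" using indep by (metis Reals_0 div_0)

lemma zero_L [simp]: "0 \<in> L"
  unfolding lattice_mem by (rule exI[of _ 0], rule exI[of _ 0]) simp
lemma p1_L [simp]: "p1 \<in> L"
  unfolding lattice_mem by (rule exI[of _ 1], rule exI[of _ 0]) simp
lemma p2_L [simp]: "p2 \<in> L"
  unfolding lattice_mem by (rule exI[of _ 0], rule exI[of _ 1]) simp
lemma add_L: "x \<in> L \<Longrightarrow> y \<in> L \<Longrightarrow> x + y \<in> L"
proof -
  assume "x \<in> L" "y \<in> L"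
  then obtain m n m' n' where "x = of_int m * p1 + of_int n * p2" "y = of_int m' * p1 + of_int n' * p2"
    by (auto simp: lattice_mem)
  hence "x + y = of_int (m + m') * p1 + of_int (n + n') * p2" by (simp add: algebra_simps)
  thus ?thesis unfolding lattice_mem by blast
qed
lemma uminus_L: "x \<in> L \<Longrightarrow> - x \<in> L"
proof -
  assume "x \<in> L"
  then obtain m n where "x = of_int m * p1 + of_int n * p2"
    by (auto simp: lattice_mem)
  hence "- x = of_int (- m) * p1 + of_int (- n) * p2" by (simp add: algebra_simps)
  thus ?thesis unfolding lattice_mem by blast
qed
lemma uminus_L_iff [simp]: "- x \<in> L \<longleftrightarrow> x \<in> L"
  using uminus_L[of x] uminus_L[of "-x"] by auto
lemma diff_L: "x \<in> L \<Longrightarrow> y \<in> L \<Longrightarrow> x - y \<in> L"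
  using add_L[of x "-y"] by simp
lemma add_L_iff: "p \<in> L \<Longrightarrow> x + p \<in> L \<longleftrightarrow> x \<in> L"
  using add_L diff_L by fastforce

definition cL :: real where
  "cL = norm p1 / (1 + (\<bar>Re (p2/p1)\<bar> + 1) / \<bar>Im (p2/p1)\<bar>)"

lemma Im_nz: "Im (p2/p1) \<noteq> 0"
  using indep complex_is_Real_iff by blast

lemma cL_pos: "cL > 0"
  using p1_nz Im_nz unfolding cL_def by (intro divide_pos_pos) (auto intro: add_pos_nonneg)

lemma coercive_real:
  fixes s t :: real
  shows "cL * (\<bar>s\<bar> + \<bar>t\<bar>) \<le> norm (of_real s * p1 + of_real t * p2)"
proof -
  define q where "q = p2/p1"
  define a where "a = Re q"
  define b where "b = Im q"
  have b: "\<bar>b\<bar> > 0" using Im_nz b_def q_def by auto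
  define w where "w = of_real s + of_real t * q"
  have "Im w = t * b" by (simp add: w_def b_def)
  hence n: "\<bar>t\<bar> * \<bar>b\<bar> \<le> norm w" using abs_Im_le_cmod[of w] by (simp add: abs_mult)
  have "Re w = s + t * a" by (simp add: w_def a_def)
  hence "\<bar>s + t * a\<bar> \<le> norm w" using abs_Re_le_cmod[of w] by simp
  moreover have "\<bar>s\<bar> \<le> \<bar>s + t * a\<bar> + \<bar>t * a\<bar>"
    using abs_triangle_ineq4[of "s + t*a" "t*a"] by simp
  ultimately have m: "\<bar>s\<bar> \<le> norm w + \<bar>t\<bar> * \<bar>a\<bar>" by (simp add: abs_mult)
  have t: "\<bar>t\<bar> \<le> norm w / \<bar>b\<bar>" using n b by (simp add: field_simps)
  have "\<bar>s\<bar> + \<bar>t\<bar> \<le> norm w + \<bar>t\<bar> * (\<bar>a\<bar> + 1)" using m by (simp add: algebra_simps)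
  also have "\<dots> \<le> norm w + norm w / \<bar>b\<bar> * (\<bar>a\<bar> + 1)"
    using t by (intro add_left_mono mult_right_mono) auto
  also have "\<dots> = norm w * (1 + (\<bar>a\<bar> + 1) / \<bar>b\<bar>)" using b by (simp add: field_simps)
  finally have *: "\<bar>s\<bar> + \<bar>t\<bar> \<le> norm w * (1 + (\<bar>a\<bar> + 1) / \<bar>b\<bar>)" .
  define D where "D = 1 + (\<bar>a\<bar> + 1) / \<bar>b\<bar>"
  have pos: "D > 0" unfolding D_def using b by (intro add_pos_nonneg) auto
  have cLD: "cL = norm p1 / D" by (simp add: cL_def D_def a_def b_def q_def)
  have "of_real s * p1 + of_real t * p2 = w * p1" using p1_nz by (simp add: w_def q_def field_simps)
  hence eq: "norm (of_real s * p1 + of_real t * p2) = norm w * norm p1" by (simp add: norm_mult)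
  have "cL * (\<bar>s\<bar> + \<bar>t\<bar>) \<le> cL * (norm w * D)"
    using * cL_pos unfolding D_def by (intro mult_left_mono) auto
  also have "\<dots> = norm w * norm p1" unfolding cLD
    using pos by simp
  finally show ?thesis using eq by (simp only: eq)
qed

lemma coercive:
  fixes m n :: int
  shows "cL * (\<bar>m\<bar> + \<bar>n\<bar>) \<le> norm (of_int m * p1 + of_int n * p2)"
  using coercive_real[of "of_int m" "of_int n"] by simp

lemma inj_param: "inj (\<lambda>(m::int,n::int). of_int m * p1 + of_int n * p2)"
proof (rule injI, clarify)
  fix m n m' n' :: int
  assume "of_int m * p1 + of_int n * p2 = of_int m' * p1 + of_int n' * p2"
  hence "of_int (m - m') * p1 + of_int (n - n') * p2 = 0" by (simp add: algebra_simps)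
  hence "cL * (\<bar>m - m'\<bar> + \<bar>n - n'\<bar>) \<le> 0" using coercive[of "m-m'" "n-n'"] by simp
  hence "\<bar>m - m'\<bar> + \<bar>n - n'\<bar> \<le> (0::real)" using cL_pos
    by (simp add: mult_le_0_iff)
  thus "m = m' \<and> n = n'" by linarith
qed

lemma L_image: "L = (\<lambda>(m::int,n::int). of_int m * p1 + of_int n * p2) ` UNIV"
  by (force simp: lattice_mem image_iff)

lemma finite_L_ball: "finite {x \<in> L. norm x \<le> R}"
proof -
  define N where "N = nat \<lceil>R / cL\<rceil>"
  have "{x \<in> L. norm x \<le> R} \<subseteq> (\<lambda>(m::int,n::int). of_int m * p1 + of_int n * p2) ` ({-int N..int N} \<times> {-int N..int N})"
  proof
    fix x assume x: "x \<in> {x \<in> L. norm x \<le> R}"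
    then obtain m n where mn: "x = of_int m * p1 + of_int n * p2" by (auto simp: lattice_mem)
    have "cL * (\<bar>m\<bar> + \<bar>n\<bar>) \<le> R" using coercive[of m n] x mn by simp
    hence "\<bar>m\<bar> + \<bar>n\<bar> \<le> R / cL" using cL_pos by (simp add: field_simps)
    hence "\<bar>m\<bar> + \<bar>n\<bar> \<le> int N" unfolding N_def by linarith
    thus "x \<in> (\<lambda>(m::int,n::int). of_int m * p1 + of_int n * p2) ` ({-int N..int N} \<times> {-int N..int N})"
      using mn by (intro image_eqI[of _ _ "(m,n)"]) auto
  qed
  thus ?thesis by (rule finite_subset) auto
qed

end

definition gpow :: "int \<Rightarrow> real" where
  "gpow k = (1 + \<bar>real_of_int k\<bar>) powr (-3/2)"

lemma gpow_nonneg: "gpow k \<ge> 0" by (simp add: gpow_def)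

lemma summable_gpow: "gpow summable_on (UNIV :: int set)"
proof -
  have s1: "summable (\<lambda>n::nat. real (Suc n) powr (-3/2))"
    using summable_real_powr_iff[of "-3/2"] summable_Suc_iff[of "\<lambda>n. real n powr (-3/2)"] by simp
  have a: "(\<lambda>n::nat. gpow (int n)) summable_on UNIV"
  proof -
    have "(\<lambda>n::nat. gpow (int n)) = (\<lambda>n. real (Suc n) powr (-3/2))"
      by (auto simp: gpow_def add.commute)
    thus ?thesis using s1 by (subst summable_on_UNIV_nonneg_real_iff) (auto simp: gpow_nonneg)
  qed
  have b: "(\<lambda>n::nat. gpow (- int (Suc n))) summable_on UNIV"
  proof -
    have "summable (\<lambda>n::nat. gpow (- int (Suc n)))"
    proof (rule summable_comparison_test'[OF s1])
      fix n :: nat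
      have "gpow (- int (Suc n)) = real (Suc (Suc n)) powr (-3/2)"
        by (simp add: gpow_def add.commute)
      also have "\<dots> \<le> real (Suc n) powr (-3/2)"
        by (rule powr_mono2') auto
      finally show "norm (gpow (- int (Suc n))) \<le> real (Suc n) powr (-3/2)"
        by (simp add: gpow_nonneg)
    qed
    thus ?thesis by (subst summable_on_UNIV_nonneg_real_iff) (auto simp: gpow_nonneg)
  qed
  have a': "gpow summable_on (range int)"
    using a by (subst summable_on_reindex) (auto simp: o_def)
  have b': "gpow summable_on (range (\<lambda>n. - int (Suc n)))"
    using b by (subst summable_on_reindex) (auto simp: o_def inj_on_def)
  have "UNIV = range int \<union> range (\<lambda>n. - int (Suc n))"
  proof (rule set_eqI)
    fix k :: int
    show "k \<in> UNIV \<longleftrightarrow> k \<in> range int \<union> range (\<lambda>n. - int (Suc n))"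
    proof (cases "k \<ge> 0")
      case True thus ?thesis by (auto intro: image_eqI[of _ _ "nat k"])
    next
      case False thus ?thesis by (auto intro!: image_eqI[of _ _ "nat (-k - 1)"])
    qed
  qed
  thus ?thesis using summable_on_union[OF a' b'] by simp
qed

lemma summable_gpow2: "(\<lambda>(m,n). gpow m * gpow n) summable_on (UNIV :: (int \<times> int) set)"
proof -
  have "(\<lambda>(m,n). gpow m * gpow n) summable_on Sigma (UNIV::int set) (\<lambda>_. UNIV::int set)"
  proof (rule summable_on_SigmaI)
    fix m :: int
    show "((\<lambda>n. case (m, n) of (m, n) \<Rightarrow> gpow m * gpow n) has_sum gpow m * infsum gpow UNIV) UNIV"
      using has_sum_cmult_right[OF has_sum_infsum[OF summable_gpow], of "gpow m"] by simp
  next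
    show "(\<lambda>m. gpow m * infsum gpow UNIV) summable_on UNIV"
      using summable_on_cmult_left[OF summable_gpow] .
  qed (auto simp: gpow_nonneg)
  thus ?thesis by simp
qed

lemma key_ineq:
  fixes x y s :: real
  assumes "1 \<le> x" "1 \<le> y" "1 \<le> s" "x \<le> 2 * s" "y \<le> 2 * s"
  shows "1 / s ^ 3 \<le> 8 * (x powr (-3/2) * y powr (-3/2))"
proof -
  have "(2 * s) powr (-3/2) \<le> x powr (-3/2)" using assms by (intro powr_mono2') auto
  moreover have "(2 * s) powr (-3/2) \<le> y powr (-3/2)" using assms by (intro powr_mono2') auto
  ultimately have 1: "(2 * s) powr (-3/2) * (2 * s) powr (-3/2) \<le> x powr (-3/2) * y powr (-3/2)"
    by (intro mult_mono) auto
  have 2: "(2 * s) powr (-3/2) * (2 * s) powr (-3/2) = (2 * s) powr (-3/2 + -3/2)"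
    by (rule powr_add[symmetric])
  have 3: "(-3/2 + -3/2 :: real) = - 3" by simp
  have 41: "(2 * s) powr (- 3) = inverse ((2 * s) powr 3)" by (rule powr_minus)
  have 42: "(2 * s) powr 3 = (2 * s) ^ 3" using assms by (subst powr_numeral) auto
  have 43: "inverse ((2 * s) ^ 3) = 1 / (8 * s^3)" by (simp add: power_mult_distrib inverse_eq_divide)
  have 4: "(2 * s) powr (- 3) = 1 / (8 * s^3)" unfolding 41 42 43 ..
  have "1 / (8 * s^3) \<le> x powr (-3/2) * y powr (-3/2)"
    using 1 unfolding 2 3 4 .
  thus ?thesis by (simp add: field_simps)
qed

context lat
begin

lemma L0_image: "L - {0} = (\<lambda>(m::int,n::int). of_int m * p1 + of_int n * p2) ` (UNIV - {(0,0)})"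
proof -
  have "L - {0} = (\<lambda>(m::int,n::int). of_int m * p1 + of_int n * p2) ` UNIV
         - (\<lambda>(m::int,n::int). of_int m * p1 + of_int n * p2) ` {(0,0)}"
    using L_image by simp
  also have "\<dots> = (\<lambda>(m::int,n::int). of_int m * p1 + of_int n * p2) ` (UNIV - {(0,0)})"
    by (rule image_set_diff[OF inj_param, symmetric])
  finally show ?thesis .
qed

lemma summable_cube: "(\<lambda>x. 1 / norm x ^ 3) summable_on (L - {0})"
proof -
  define \<phi> where "\<phi> = (\<lambda>(m::int,n::int). of_int m * p1 + of_int n * p2)"
  have "((\<lambda>x. 1 / norm x ^ 3) \<circ> \<phi>) summable_on (UNIV - {(0,0)})"
  proof (rule summable_on_comparison_test)
    show "(\<lambda>(m,n). 8 / cL^3 * (gpow m * gpow n)) summable_on (UNIV - {(0::int,0::int)})"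
      using summable_on_subset[OF summable_on_cmult_right[OF summable_gpow2, of "8 / cL^3"]]
      by (simp add: case_prod_unfold)
  next
    fix mn :: "int \<times> int" assume mn: "mn \<in> UNIV - {(0,0)}"
    obtain m n where mn': "mn = (m,n)" by (cases mn)
    define s where "s = real_of_int (\<bar>m\<bar> + \<bar>n\<bar>)"
    have s1: "s \<ge> 1" using mn mn' unfolding s_def by auto
    have c: "cL * s \<le> norm (\<phi> mn)" using coercive[of m n] unfolding \<phi>_def mn' s_def by simp
    have cs: "cL * s > 0" using cL_pos s1 by simp
    have "1 / norm (\<phi> mn) ^ 3 \<le> 1 / (cL * s) ^ 3"
      using c cs by (intro divide_left_mono power_mono mult_pos_pos) auto
    also have "\<dots> = 1 / cL^3 * (1 / s^3)" by (simp add: power_mult_distrib)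
    also have "\<dots> \<le> 1 / cL^3 * (8 * (gpow m * gpow n))"
      unfolding gpow_def using cL_pos s1
      by (intro mult_left_mono key_ineq) (auto simp: s_def)
    finally show "((\<lambda>x. 1 / norm x ^ 3) \<circ> \<phi>) mn \<le> (case mn of (m,n) \<Rightarrow> 8 / cL^3 * (gpow m * gpow n))"
      by (simp add: mn')
  qed auto
  thus ?thesis
    unfolding L0_image \<phi>_def[symmetric]
    by (subst summable_on_reindex) (use inj_param in \<open>auto simp: \<phi>_def intro: inj_on_subset\<close>)
qed

lemma lat_abs_summable:
  fixes f :: "complex \<Rightarrow> complex"
  assumes A: "A \<subseteq> L" and R: "R > 0"
      and bnd: "\<And>x. x \<in> A \<Longrightarrow> norm x \<ge> R \<Longrightarrow> norm (f x) \<le> C / norm x ^ 3"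
  shows "(\<lambda>x. norm (f x)) summable_on A"
proof -
  have fin: "finite {x \<in> A. norm x < R}"
    by (rule finite_subset[OF _ finite_L_ball[of R]]) (use A in auto)
  have "(\<lambda>x. C * (1 / norm x ^ 3)) summable_on {x \<in> A. norm x \<ge> R}"
    by (rule summable_on_subset[OF summable_on_cmult_right[OF summable_cube]]) (use A R in auto)
  hence s2: "(\<lambda>x. norm (f x)) summable_on {x \<in> A. norm x \<ge> R}"
    by (rule summable_on_comparison_test) (use bnd in auto)
  have "(\<lambda>x. norm (f x)) summable_on ({x \<in> A. norm x < R} \<union> {x \<in> A. norm x \<ge> R})"
    by (rule summable_on_union[OF summable_on_finite[OF fin] s2])
  also have "{x \<in> A. norm x < R} \<union> {x \<in> A. norm x \<ge> R} = A" by auto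
  finally show ?thesis .
qed

lemma lat_summable:
  fixes f :: "complex \<Rightarrow> complex"
  assumes A: "A \<subseteq> L" and R: "R > 0"
      and bnd: "\<And>x. x \<in> A \<Longrightarrow> norm x \<ge> R \<Longrightarrow> norm (f x) \<le> C / norm x ^ 3"
  shows "f summable_on A"
  by (rule abs_summable_summable[OF lat_abs_summable[OF assms]])

end

lemma norm_prod_minus1_le_gen:
  fixes u :: "'i \<Rightarrow> complex"
  shows "norm ((\<Prod>i\<in>F. 1 + u i) - 1) \<le> (\<Prod>i\<in>F. 1 + norm (u i)) - 1"
proof (induction F rule: infinite_finite_induct)
  case (insert x A)
  from insert.hyps have
    "norm ((\<Prod>n\<in>insert x A. 1 + u n) - 1) =
       norm ((\<Prod>n\<in>A. 1 + u n) - 1 + u x * (\<Prod>n\<in>A. 1 + u n))"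
    by (simp add: algebra_simps)
  also have "\<dots> \<le> norm ((\<Prod>n\<in>A. 1 + u n) - 1) + norm (u x * (\<Prod>n\<in>A. 1 + u n))"
    by (rule norm_triangle_ineq)
  also have "norm (u x * (\<Prod>n\<in>A. 1 + u n)) = norm (u x) * (\<Prod>x\<in>A. norm (1 + u x))"
    by (simp add: prod_norm norm_mult)
  also have "(\<Prod>x\<in>A. norm (1 + u x)) \<le> (\<Prod>x\<in>A. norm (1::complex) + norm (u x))"
    by (intro prod_mono norm_triangle_ineq ballI conjI) auto
  also have "norm (1::complex) = 1" by simp
  also note insert.IH
  also have "(\<Prod>n\<in>A. 1 + norm (u n)) - 1 + norm (u x) * (\<Prod>x\<in>A. 1 + norm (u x)) =
             (\<Prod>n\<in>insert x A. 1 + norm (u n)) - 1"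
    using insert.hyps by (simp add: algebra_simps)
  finally show ?case by - (simp_all add: mult_left_mono)
qed simp_all

lemma tail_small:
  fixes M :: "'i \<Rightarrow> real"
  assumes M: "M summable_on I" and nn: "\<And>i. i \<in> I \<Longrightarrow> M i \<ge> 0" and e: "e > 0"
  obtains F0 where "finite F0" "F0 \<subseteq> I" "\<And>G. finite G \<Longrightarrow> G \<subseteq> I - F0 \<Longrightarrow> sum M G \<le> e"
proof -
  obtain F0 where F0: "finite F0" "F0 \<subseteq> I" "dist (sum M F0) (infsum M I) \<le> e"
    using infsum_finite_approximation[OF M e] by blast
  have "sum M G \<le> e" if G: "finite G" "G \<subseteq> I - F0" for G
  proof -
    have "sum M (F0 \<union> G) \<le> infsum M I"
      using G F0 by (intro finite_sum_le_infsum M) (auto intro: nn)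
    moreover have "sum M (F0 \<union> G) = sum M F0 + sum M G"
      using G F0 by (intro sum.union_disjoint) auto
    ultimately show ?thesis using F0(3) by (auto simp: dist_real_def)
  qed
  thus ?thesis using that F0 by blast
qed

lemma net_prod_uniform:
  fixes u :: "'i \<Rightarrow> 'x \<Rightarrow> complex" and M :: "'i \<Rightarrow> real"
  assumes M: "M summable_on I" and nn: "\<And>i. i \<in> I \<Longrightarrow> M i \<ge> 0"
      and bnd: "\<And>i x. i \<in> I \<Longrightarrow> x \<in> K \<Longrightarrow> norm (u i x) \<le> M i"
  shows "uniform_limit K (\<lambda>F x. \<Prod>i\<in>F. 1 + u i x)
           (\<lambda>x. Lim (finite_subsets_at_top I) (\<lambda>F. \<Prod>i\<in>F. 1 + u i x)) (finite_subsets_at_top I)"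
proof (rule uniform_limitI)
  fix e :: real assume e: "e > 0"
  define S where "S = infsum M I"
  define P where "P = (\<lambda>F x. \<Prod>i\<in>F. 1 + u i x)"
  have sumle: "sum M F \<le> S" if "finite F" "F \<subseteq> I" for F
    unfolding S_def using that by (intro finite_sum_le_infsum M) (auto intro: nn)
  have pb: "(\<Prod>i\<in>F. 1 + norm (u i x)) \<le> exp (sum M F)" if "finite F" "F \<subseteq> I" "x \<in> K" for F x
  proof -
    have "(\<Prod>i\<in>F. 1 + norm (u i x)) \<le> exp (\<Sum>i\<in>F. norm (u i x))"
      by (rule prod_le_exp_sum) auto
    also have "\<dots> \<le> exp (sum M F)"
      using that by (intro exp_le_cancel_iff[THEN iffD2] sum_mono bnd) auto
    finally show ?thesis .
  qed
  have normP: "norm (P F x) \<le> exp S" if "finite F" "F \<subseteq> I" "x \<in> K" for F x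
  proof -
    have "norm (P F x) = (\<Prod>i\<in>F. norm (1 + u i x))" by (simp add: P_def prod_norm)
    also have "\<dots> \<le> (\<Prod>i\<in>F. 1 + norm (u i x))"
      by (intro prod_mono conjI) (auto intro: order.trans[OF norm_triangle_ineq])
    also have "\<dots> \<le> exp (sum M F)" by (rule pb[OF that])
    also have "\<dots> \<le> exp S" using sumle[OF that(1,2)] by simp
    finally show ?thesis .
  qed
  have diffb: "norm (P F x - P F0 x) \<le> exp S * (exp (sum M (F - F0)) - 1)"
    if "finite F" "F0 \<subseteq> F" "F \<subseteq> I" "x \<in> K" for F F0 x
  proof -
    have fin0: "finite F0" using that finite_subset by blast
    have "P F x = P F0 x * P (F - F0) x"
      unfolding P_def using that by (subst prod.subset_diff[of F0 F]) (auto simp: mult.commute)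
    hence "P F x - P F0 x = P F0 x * (P (F - F0) x - 1)" by (simp add: algebra_simps)
    hence "norm (P F x - P F0 x) = norm (P F0 x) * norm (P (F - F0) x - 1)" by (simp add: norm_mult)
    also have "\<dots> \<le> exp S * ((\<Prod>i\<in>F-F0. 1 + norm (u i x)) - 1)"
      using normP[OF fin0 _ that(4)] that norm_prod_minus1_le_gen[of "\<lambda>i. u i x" "F - F0"]
      by (intro mult_mono) (auto simp: P_def)
    also have "\<dots> \<le> exp S * (exp (sum M (F - F0)) - 1)"
      using that pb[of "F - F0" x] by (intro mult_left_mono) auto
    finally show ?thesis .
  qed
  define \<delta> where "\<delta> = ln (1 + e / (4 * exp S))"
  have \<delta>: "\<delta> > 0" unfolding \<delta>_def using e by (intro ln_gt_zero) (auto intro: divide_pos_pos)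
  have exp\<delta>: "exp S * (exp \<delta> - 1) = e / 4"
    unfolding \<delta>_def using e by (subst exp_ln) (auto simp: add_pos_pos)
  obtain F0 where F0: "finite F0" "F0 \<subseteq> I" "\<And>G. finite G \<Longrightarrow> G \<subseteq> I - F0 \<Longrightarrow> sum M G \<le> \<delta>"
    using tail_small[OF M nn \<delta>] by blast
  have close: "norm (P F x - P F0 x) \<le> e / 4" if "finite F" "F0 \<subseteq> F" "F \<subseteq> I" "x \<in> K" for F x
  proof -
    have "norm (P F x - P F0 x) \<le> exp S * (exp (sum M (F - F0)) - 1)" by (rule diffb[OF that])
    also have "\<dots> \<le> exp S * (exp \<delta> - 1)"
      using that F0 by (intro mult_left_mono diff_right_mono exp_le_cancel_iff[THEN iffD2] F0(3)) auto
    finally show ?thesis using exp\<delta> by simp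
  qed
  have conv: "(P' \<longlongrightarrow> Lim (finite_subsets_at_top I) P') (finite_subsets_at_top I)"
    if "P' = (\<lambda>F. P F x)" "x \<in> K" for x P'
  proof -
    have "cauchy_filter (filtermap P' (finite_subsets_at_top I))"
    proof (subst cauchy_filter_metric_filtermap, intro allI impI)
      fix \<epsilon> :: real assume \<epsilon>: "\<epsilon> > 0"
      define \<delta>' where "\<delta>' = ln (1 + \<epsilon> / (4 * exp S))"
      have \<delta>': "\<delta>' > 0" unfolding \<delta>'_def using \<epsilon> by (intro ln_gt_zero) (auto intro: divide_pos_pos)
      have exp\<delta>': "exp S * (exp \<delta>' - 1) = \<epsilon> / 4"
        unfolding \<delta>'_def using \<epsilon> by (subst exp_ln) (auto simp: add_pos_pos)
      obtain G0 where G0: "finite G0" "G0 \<subseteq> I" "\<And>G. finite G \<Longrightarrow> G \<subseteq> I - G0 \<Longrightarrow> sum M G \<le> \<delta>'"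
        using tail_small[OF M nn \<delta>'] by blast
      have cl: "norm (P F x - P G0 x) \<le> \<epsilon> / 4" if "finite F" "G0 \<subseteq> F" "F \<subseteq> I" for F
      proof -
        have "norm (P F x - P G0 x) \<le> exp S * (exp (sum M (F - G0)) - 1)"
          by (rule diffb[OF that \<open>x \<in> K\<close>])
        also have "\<dots> \<le> exp S * (exp \<delta>' - 1)"
          using that G0 by (intro mult_left_mono diff_right_mono exp_le_cancel_iff[THEN iffD2] G0(3)) auto
        finally show ?thesis using exp\<delta>' by simp
      qed
      show "\<exists>Q. eventually Q (finite_subsets_at_top I) \<and> (\<forall>F G. Q F \<and> Q G \<longrightarrow> dist (P' F) (P' G) < \<epsilon>)"
      proof (rule exI[of _ "\<lambda>F. finite F \<and> G0 \<subseteq> F \<and> F \<subseteq> I"], intro conjI allI impI)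
        show "eventually (\<lambda>F. finite F \<and> G0 \<subseteq> F \<and> F \<subseteq> I) (finite_subsets_at_top I)"
          unfolding eventually_finite_subsets_at_top using G0 by blast
      next
        fix F G assume FG: "(finite F \<and> G0 \<subseteq> F \<and> F \<subseteq> I) \<and> finite G \<and> G0 \<subseteq> G \<and> G \<subseteq> I"
        have "dist (P' F) (P' G) \<le> norm (P F x - P G0 x) + norm (P G x - P G0 x)"
          unfolding that(1) dist_norm using norm_triangle_ineq4[of "P F x - P G0 x" "P G x - P G0 x"]
          by simp
        also have "\<dots> \<le> \<epsilon> / 4 + \<epsilon> / 4" using FG by (intro add_mono cl) auto
        finally show "dist (P' F) (P' G) < \<epsilon>" using \<epsilon> by simp
      qed
    qed
    hence "convergent_filter (filtermap P' (finite_subsets_at_top I))"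
      by (rule cauchy_filter_convergent)
    then obtain c where "filtermap P' (finite_subsets_at_top I) \<le> nhds c"
      by (auto simp: convergent_filter_iff)
    hence "(P' \<longlongrightarrow> c) (finite_subsets_at_top I)" by (simp add: filterlim_def)
    thus ?thesis using tendsto_Lim[of "finite_subsets_at_top I" P' c] by simp
  qed
  show "\<forall>\<^sub>F F in finite_subsets_at_top I. \<forall>x\<in>K.
          dist (\<Prod>i\<in>F. 1 + u i x) (Lim (finite_subsets_at_top I) (\<lambda>F. \<Prod>i\<in>F. 1 + u i x)) < e"
    unfolding eventually_finite_subsets_at_top
  proof (rule exI[of _ F0], intro conjI allI impI ballI)
    fix F x assume F: "finite F \<and> F0 \<subseteq> F \<and> F \<subseteq> I" and x: "x \<in> K"
    define l where "l = Lim (finite_subsets_at_top I) (\<lambda>F. P F x)"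
    have lim: "((\<lambda>G. P G x) \<longlongrightarrow> l) (finite_subsets_at_top I)"
      unfolding l_def by (rule conv[OF refl x])
    have "((\<lambda>G. norm (P F x - P G x)) \<longlongrightarrow> norm (P F x - l)) (finite_subsets_at_top I)"
      by (intro tendsto_intros lim)
    moreover have "eventually (\<lambda>G. norm (P F x - P G x) \<le> e / 2) (finite_subsets_at_top I)"
      unfolding eventually_finite_subsets_at_top
    proof (rule exI[of _ F0], intro conjI allI impI)
      fix G assume G: "finite G \<and> F0 \<subseteq> G \<and> G \<subseteq> I"
      have "norm (P F x - P G x) \<le> norm (P F x - P F0 x) + norm (P G x - P F0 x)"
        using norm_triangle_ineq4[of "P F x - P F0 x" "P G x - P F0 x"] by simp
      also have "\<dots> \<le> e / 4 + e / 4" using F G x by (intro add_mono close) auto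
      finally show "norm (P F x - P G x) \<le> e / 2" by simp
    qed (use F0 in auto)
    ultimately have "norm (P F x - l) \<le> e / 2"
      by (intro tendsto_upperbound) auto
    thus "dist (\<Prod>i\<in>F. 1 + u i x) (Lim (finite_subsets_at_top I) (\<lambda>F. \<Prod>i\<in>F. 1 + u i x)) < e"
      using e by (simp add: l_def P_def dist_norm)
  qed (use F0 in auto)
qed

definition Ef :: "complex \<Rightarrow> complex \<Rightarrow> complex" where
  "Ef z l = exp (z / l + z\<^sup>2 / (2 * l\<^sup>2)) * (1 - z / l)"

lemma Ef_wf: "Ef z l = weierstrass_factor 2 (z / l)"
proof -
  have "{1..2::nat} = {1, 2}" by auto
  thus ?thesis by (simp add: Ef_def weierstrass_factor_def power_divide mult.commute)
qed

lemma Ef_bound: "norm (z / l) \<le> 1/2 \<Longrightarrow> norm (Ef z l - 1) \<le> 3 * norm (z / l) ^ 3"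
  using weierstrass_factor_bound[of "z/l" 2] by (simp add: Ef_wf numeral_3_eq_3)

lemma Ef_0 [simp]: "Ef 0 l = 1" by (simp add: Ef_def)
lemma Ef_self: "l \<noteq> 0 \<Longrightarrow> Ef l l = 0" by (simp add: Ef_def)
lemma Ef_eq_0_iff: "l \<noteq> 0 \<Longrightarrow> Ef z l = 0 \<longleftrightarrow> z = l" by (auto simp: Ef_def field_simps)
lemma Ef_neg: "Ef (- z) (- l) = Ef z l" by (simp add: Ef_def)

lemma Ef_alt: "Ef z l = exp (z * inverse l + z\<^sup>2 * inverse (2 * l\<^sup>2)) * (1 - z * inverse l)"
  unfolding Ef_def by (simp only: divide_inverse)
lemma Ef_cont [continuous_intros]: "continuous_on A (\<lambda>z. Ef z l)"
  unfolding Ef_alt by (intro continuous_intros)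
lemma Ef_holo [holomorphic_intros]: "(\<lambda>z. Ef z l) holomorphic_on A"
  unfolding Ef_alt by (intro holomorphic_intros)

lemma Ef_deriv:
  assumes "l \<noteq> 0"
  shows "((\<lambda>z. Ef z l) has_field_derivative
           Ef z l * (1 / l + z / l\<^sup>2) - exp (z / l + z\<^sup>2 / (2 * l\<^sup>2)) / l) (at z)"
  unfolding Ef_def using assms
  by (auto intro!: derivative_eq_intros simp: field_simps power2_eq_square)

lemma Ef_logderiv:
  assumes "l \<noteq> 0" "z \<noteq> l"
  shows "(Ef z l * (1 / l + z / l\<^sup>2) - exp (z / l + z\<^sup>2 / (2 * l\<^sup>2)) / l) / Ef z l
          = 1 / (z - l) + 1 / l + z / l\<^sup>2"
proof -
  have "Ef z l \<noteq> 0" using assms Ef_eq_0_iff by blast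
  moreover have "exp (z / l + z\<^sup>2 / (2 * l\<^sup>2)) / l / Ef z l = - 1 / (z - l)"
    using assms by (simp add: Ef_def field_simps)
  ultimately show ?thesis by (simp add: diff_divide_distrib)
qed

context lat
begin

abbreviation "L0 \<equiv> L - {0}"

definition Pi :: "complex \<Rightarrow> complex" where
  "Pi z = Lim (finite_subsets_at_top L0) (\<lambda>F. \<Prod>l\<in>F. Ef z l)"

lemma sigma_eq: "weierstrass_sigma L z = z * Pi z"
  by (simp add: weierstrass_sigma_def Pi_def Ef_def)

lemma bounded_Ef:
  "\<exists>b. \<forall>z\<in>cball 0 R. norm (Ef z l - 1) \<le> b"
proof -
  have "compact ((\<lambda>z. Ef z l - 1) ` cball 0 R)"
    by (intro compact_continuous_image continuous_intros) auto
  then obtain b where "\<forall>y\<in>(\<lambda>z. Ef z l - 1) ` cball 0 R. norm y \<le> b"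
    using compact_imp_bounded bounded_iff by metis
  thus ?thesis by auto
qed

lemma Pi_uniform:
  assumes R: "R > 0"
  shows "uniform_limit (cball 0 R) (\<lambda>F z. \<Prod>l\<in>F. Ef z l) Pi (finite_subsets_at_top L0)"
proof -
  define B where "B = (\<lambda>l. SOME b. \<forall>z\<in>cball 0 R. norm (Ef z l - 1) \<le> b)"
  have B: "norm (Ef z l - 1) \<le> B l" if "z \<in> cball 0 R" for z l
    using someI_ex[OF bounded_Ef[of R l]] that unfolding B_def by blast
  have B0: "B l \<ge> 0" for l using B[of 0 l] R by (auto intro: order.trans[OF norm_ge_zero])
  define M where "M = (\<lambda>l. if norm l < 2 * R then B l else 3 * R ^ 3 * (1 / norm l ^ 3))"
  have Mnn: "M l \<ge> 0" for l using R by (auto simp: M_def B0)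
  have Msum: "M summable_on L0"
  proof -
    have fin: "finite {l \<in> L0. norm l < 2 * R}"
      by (rule finite_subset[OF _ finite_L_ball[of "2*R"]]) auto
    have "(\<lambda>l. 3 * R ^ 3 * (1 / norm l ^ 3)) summable_on {l \<in> L0. norm l \<ge> 2 * R}"
      by (rule summable_on_subset[OF summable_on_cmult_right[OF summable_cube]]) auto
    hence s2: "M summable_on {l \<in> L0. norm l \<ge> 2 * R}"
      by (rule summable_on_cong[THEN iffD1, rotated]) (auto simp: M_def)
    have "M summable_on ({l \<in> L0. norm l < 2 * R} \<union> {l \<in> L0. norm l \<ge> 2 * R})"
      by (rule summable_on_union[OF summable_on_finite[OF fin] s2])
    also have "{l \<in> L0. norm l < 2 * R} \<union> {l \<in> L0. norm l \<ge> 2 * R} = L0" by auto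
    finally show ?thesis .
  qed
  have bnd: "norm (Ef z l - 1) \<le> M l" if "l \<in> L0" "z \<in> cball 0 R" for l z
  proof (cases "norm l < 2 * R")
    case True thus ?thesis using B[OF that(2)] by (simp add: M_def)
  next
    case False
    hence l: "norm l \<ge> 2 * R" "norm l > 0" using R by auto
    have z: "norm z \<le> R" using that by auto
    have "norm (z / l) \<le> R / norm l" using z l by (simp add: norm_divide divide_right_mono)
    also have "\<dots> \<le> 1 / 2" using l R by (simp add: field_simps)
    finally have h: "norm (z / l) \<le> 1 / 2" .
    have "norm (Ef z l - 1) \<le> 3 * norm (z / l) ^ 3" by (rule Ef_bound[OF h])
    also have "\<dots> \<le> 3 * (R / norm l) ^ 3"
      using z l by (intro mult_left_mono power_mono) (auto simp: norm_divide divide_right_mono)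
    also have "\<dots> = 3 * R ^ 3 * (1 / norm l ^ 3)" by (simp add: power_divide)
    finally show ?thesis using False by (simp add: M_def)
  qed
  have "uniform_limit (cball 0 R) (\<lambda>F z. \<Prod>l\<in>F. 1 + (Ef z l - 1))
          (\<lambda>z. Lim (finite_subsets_at_top L0) (\<lambda>F. \<Prod>l\<in>F. 1 + (Ef z l - 1))) (finite_subsets_at_top L0)"
    by (rule net_prod_uniform[OF Msum]) (use Mnn bnd in auto)
  moreover have "(\<lambda>z. Lim (finite_subsets_at_top L0) (\<lambda>F. \<Prod>l\<in>F. 1 + (Ef z l - 1))) = Pi"
    by (rule ext) (simp add: Pi_def)
  moreover have "(\<lambda>F z. \<Prod>l\<in>F. 1 + (Ef z l - 1)) = (\<lambda>F z. \<Prod>l\<in>F. Ef z l)"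
    by simp
  ultimately show ?thesis by simp
qed

lemma Pi_tendsto: "((\<lambda>F. \<Prod>l\<in>F. Ef z l) \<longlongrightarrow> Pi z) (finite_subsets_at_top L0)"
proof -
  have "norm z + 1 > 0" using norm_ge_zero[of z] by linarith
  thus ?thesis by (rule tendsto_uniform_limitI[OF Pi_uniform]) auto
qed

lemma Pi_holo_ball: "Pi holomorphic_on ball 0 R"
proof (cases "R > 0")
  case True
  have "continuous_on (cball 0 R) Pi \<and> Pi holomorphic_on ball 0 R"
  proof (rule holomorphic_uniform_limit[OF _ Pi_uniform[OF True]])
    show "\<forall>\<^sub>F n in finite_subsets_at_top L0. continuous_on (cball 0 R) (\<lambda>z. \<Prod>l\<in>n. Ef z l) \<and>
            (\<lambda>z. \<Prod>l\<in>n. Ef z l) holomorphic_on ball 0 R"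
      by (intro always_eventually allI conjI continuous_intros holomorphic_intros)
  qed auto
  thus ?thesis by blast
qed (simp add: ball_empty holomorphic_on_def)

lemma Pi_holo: "Pi holomorphic_on UNIV"
proof -
  have "Pi field_differentiable (at z)" for z
    using Pi_holo_ball[of "norm z + 1"] holomorphic_on_imp_differentiable_at[of Pi "ball 0 (norm z + 1)" z]
    by auto
  thus ?thesis by (auto simp: holomorphic_on_def field_differentiable_at_within)
qed

lemma Pi_0: "Pi 0 = 1"
proof -
  have "prod (Ef 0) = (\<lambda>F. 1)" by (simp add: fun_eq_iff)
  thus ?thesis unfolding Pi_def by (simp add: tendsto_Lim)
qed

lemma Pi_even: "Pi (- z) = Pi z"
proof -
  have inj: "inj_on uminus L0" by (auto simp: inj_on_def)
  have img: "uminus ` L0 = L0"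
  proof (rule set_eqI)
    fix x show "x \<in> uminus ` L0 \<longleftrightarrow> x \<in> L0"
    proof
      assume "x \<in> L0" thus "x \<in> uminus ` L0" by (intro image_eqI[of _ _ "- x"]) auto
    qed auto
  qed
  have "((\<lambda>F. \<Prod>l\<in>F. Ef z l) \<longlongrightarrow> Pi z) (finite_subsets_at_top (uminus ` L0))"
    using Pi_tendsto[of z] img by simp
  hence "((\<lambda>F. \<Prod>l\<in>F. Ef z l) \<longlongrightarrow> Pi z) (filtermap ((`) uminus) (finite_subsets_at_top L0))"
    by (simp add: filtermap_image_finite_subsets_at_top[OF inj])
  hence "((\<lambda>F. \<Prod>l\<in>uminus ` F. Ef z l) \<longlongrightarrow> Pi z) (finite_subsets_at_top L0)"
    by (simp add: filterlim_filtermap o_def)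
  moreover have "\<forall>\<^sub>F F in finite_subsets_at_top L0. (\<Prod>l\<in>uminus ` F. Ef z l) = (\<Prod>l\<in>F. Ef (- z) l)"
    by (intro always_eventually allI)
       (simp add: prod.reindex inj_on_def Ef_neg[of z, symmetric])
  ultimately have "((\<lambda>F. \<Prod>l\<in>F. Ef (- z) l) \<longlongrightarrow> Pi z) (finite_subsets_at_top L0)"
    by (rule Lim_transform_eventually)
  thus ?thesis using Pi_tendsto[of "- z"] tendsto_unique finite_subsets_at_top_neq_bot by blast
qed

lemma Pi_lattice: "l \<in> L0 \<Longrightarrow> Pi l = 0"
proof -
  assume l: "l \<in> L0"
  have "\<forall>\<^sub>F F in finite_subsets_at_top L0. (\<Prod>m\<in>F. Ef l m) = 0"
    unfolding eventually_finite_subsets_at_top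
    using l by (intro exI[of _ "{l}"]) (auto intro: Ef_self)
  hence "((\<lambda>F. \<Prod>m\<in>F. Ef l m) \<longlongrightarrow> 0) (finite_subsets_at_top L0)"
    by (rule tendsto_eventually)
  thus ?thesis using Pi_tendsto[of l] tendsto_unique finite_subsets_at_top_neq_bot by blast
qed

definition sig :: "complex \<Rightarrow> complex" where "sig z = z * Pi z"

lemma sig_holo: "sig holomorphic_on UNIV"
  unfolding sig_def by (intro holomorphic_intros Pi_holo)

lemma sig_odd: "sig (- z) = - sig z"
  by (simp add: sig_def Pi_even)

lemma sig_lattice: "l \<in> L \<Longrightarrow> sig l = 0"
  using Pi_lattice[of l] by (cases "l = 0") (auto simp: sig_def)

lemma sig_nz_imp: "sig z \<noteq> 0 \<Longrightarrow> z \<notin> L"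
  using sig_lattice by blast

definition hZ :: "complex \<Rightarrow> complex \<Rightarrow> complex" where
  "hZ z l = 1 / (z - l) + 1 / l + z / l\<^sup>2"

lemma hZ_alt: "l \<noteq> 0 \<Longrightarrow> z \<noteq> l \<Longrightarrow> hZ z l = z\<^sup>2 / (l\<^sup>2 * (z - l))"
  by (simp add: hZ_def field_simps power2_eq_square)

lemma hZ_summable:
  assumes "z \<notin> L"
  shows "hZ z summable_on L0"
proof (rule lat_summable[where R="2 * norm z + 1" and C="2 * norm z ^ 2"])
  fix l assume l: "l \<in> L0" "2 * norm z + 1 \<le> norm l"
  have lz: "l \<noteq> z" using assms l by auto
  have nl: "norm l > 0" using l by auto
  have d: "norm (z - l) \<ge> norm l / 2"
    using norm_triangle_ineq2[of l z] l by (simp add: norm_minus_commute)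
  have "norm (hZ z l) = norm z ^ 2 / (norm l ^ 2 * norm (z - l))"
    using l lz by (simp add: hZ_alt norm_divide norm_mult norm_power)
  also have "\<dots> \<le> norm z ^ 2 / (norm l ^ 2 * (norm l / 2))"
    using d nl by (intro divide_left_mono mult_left_mono mult_pos_pos) auto
  also have "\<dots> = 2 * norm z ^ 2 / norm l ^ 3" by (simp add: power2_eq_square power3_eq_cube)
  finally show "norm (hZ z l) \<le> 2 * norm z ^ 2 / norm l ^ 3" .
qed (auto intro: add_nonneg_pos)

definition Zf :: "complex \<Rightarrow> complex" where
  "Zf z = 1 / z + infsum (hZ z) L0"

lemma sig_deriv:
  assumes z: "z \<notin> L"
  shows "(sig has_field_derivative sig z * Zf z) (at z)"
proof -
  define R where "R = norm z + 1"
  have R: "R > 0" "z \<in> ball 0 R" unfolding R_def by (auto intro: add_nonneg_pos)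
  have z0: "z \<noteq> 0" using z by auto
  define PF where "PF = (\<lambda>F w. w * (\<Prod>l\<in>F. Ef w l))"
  have ul: "uniform_limit (ball 0 R) PF sig (finite_subsets_at_top L0)"
  proof (rule uniform_limitI)
    fix e :: real assume e: "e > 0"
    have "\<forall>\<^sub>F F in finite_subsets_at_top L0. \<forall>w\<in>cball 0 R. dist (\<Prod>l\<in>F. Ef w l) (Pi w) < e / R"
      using uniform_limitD[OF Pi_uniform[OF R(1)], of "e / R"] e R by auto
    thus "\<forall>\<^sub>F F in finite_subsets_at_top L0. \<forall>w\<in>ball 0 R. dist (PF F w) (sig w) < e"
    proof eventually_elim
      case (elim F)
      show ?case
      proof
        fix w :: complex assume w: "w \<in> ball 0 R"
        have "dist (PF F w) (sig w) = norm w * dist (\<Prod>l\<in>F. Ef w l) (Pi w)"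
          by (simp add: PF_def sig_def dist_norm norm_mult[symmetric] algebra_simps)
        also have "\<dots> \<le> R * dist (\<Prod>l\<in>F. Ef w l) (Pi w)"
          using w by (intro mult_right_mono) auto
        also have "\<dots> < R * (e / R)" using elim w R by (intro mult_strict_left_mono) auto
        finally show "dist (PF F w) (sig w) < e" using R by simp
      qed
    qed
  qed
  have hol: "\<forall>\<^sub>F F in finite_subsets_at_top L0. PF F holomorphic_on ball 0 R"
    unfolding PF_def by (intro always_eventually allI holomorphic_intros)
  have lim1: "((\<lambda>F. deriv (PF F) z) \<longlongrightarrow> deriv sig z) (finite_subsets_at_top L0)"
    by (rule deriv_complex_uniform_limit[OF ul hol]) (use R in auto)
  have dF: "deriv (PF F) z = PF F z * (1 / z + sum (hZ z) F)" if F: "finite F" "F \<subseteq> L0" for F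
  proof -
    have nz: "\<And>l. l \<in> F \<Longrightarrow> Ef z l \<noteq> 0" using F z Ef_eq_0_iff by force
    have "((\<lambda>w. \<Prod>l\<in>F. Ef w l) has_field_derivative
             (\<Prod>l\<in>F. Ef z l) * (\<Sum>l\<in>F. (Ef z l * (1 / l + z / l\<^sup>2) - exp (z / l + z\<^sup>2 / (2 * l\<^sup>2)) / l) / Ef z l)) (at z)"
      using has_field_derivative_prod'[of F "\<lambda>l w. Ef w l" z
              "\<lambda>l. Ef z l * (1 / l + z / l\<^sup>2) - exp (z / l + z\<^sup>2 / (2 * l\<^sup>2)) / l"] nz F Ef_deriv
      by auto
    also have "(\<Sum>l\<in>F. (Ef z l * (1 / l + z / l\<^sup>2) - exp (z / l + z\<^sup>2 / (2 * l\<^sup>2)) / l) / Ef z l)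
               = sum (hZ z) F"
    proof (intro sum.cong refl)
      fix l assume "l \<in> F"
      hence "l \<noteq> 0" "z \<noteq> l" using F z by auto
      thus "(Ef z l * (1 / l + z / l\<^sup>2) - exp (z / l + z\<^sup>2 / (2 * l\<^sup>2)) / l) / Ef z l = hZ z l"
        by (simp add: Ef_logderiv hZ_def)
    qed
    finally have d: "((\<lambda>w. \<Prod>l\<in>F. Ef w l) has_field_derivative (\<Prod>l\<in>F. Ef z l) * sum (hZ z) F) (at z)" .
    have "(PF F has_field_derivative (\<Prod>l\<in>F. Ef z l) + z * ((\<Prod>l\<in>F. Ef z l) * sum (hZ z) F)) (at z)"
      unfolding PF_def by (rule derivative_eq_intros d | simp)+
    hence "deriv (PF F) z = (\<Prod>l\<in>F. Ef z l) + z * ((\<Prod>l\<in>F. Ef z l) * sum (hZ z) F)"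
      by (rule DERIV_imp_deriv)
    also have "\<dots> = PF F z * (1 / z + sum (hZ z) F)"
      using z0 by (simp add: PF_def field_simps)
    finally show ?thesis .
  qed
  have "((\<lambda>F. PF F z * (1 / z + sum (hZ z) F)) \<longlongrightarrow> sig z * (1 / z + infsum (hZ z) L0)) (finite_subsets_at_top L0)"
  proof (intro tendsto_intros)
    show "((\<lambda>F. PF F z) \<longlongrightarrow> sig z) (finite_subsets_at_top L0)"
      unfolding PF_def sig_def by (intro tendsto_intros Pi_tendsto)
    show "(sum (hZ z) \<longlongrightarrow> infsum (hZ z) L0) (finite_subsets_at_top L0)"
      using hZ_summable[OF z] by (simp add: has_sum_def[symmetric])
  qed
  moreover have "\<forall>\<^sub>F F in finite_subsets_at_top L0. PF F z * (1 / z + sum (hZ z) F) = deriv (PF F) z"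
    by (rule eventually_finite_subsets_at_top_weakI) (use dF in auto)
  ultimately have "((\<lambda>F. deriv (PF F) z) \<longlongrightarrow> sig z * Zf z) (finite_subsets_at_top L0)"
    unfolding Zf_def by (rule Lim_transform_eventually)
  hence "deriv sig z = sig z * Zf z"
    using lim1 tendsto_unique finite_subsets_at_top_neq_bot by blast
  moreover have "sig field_differentiable (at z)"
    using sig_holo holomorphic_on_imp_differentiable_at by blast
  ultimately show ?thesis using DERIV_deriv_iff_field_differentiable by metis
qed

end

lemma infsum_diff':
  fixes f g :: "'a \<Rightarrow> complex"
  assumes "f summable_on A" "g summable_on A"
  shows "infsum (\<lambda>x. f x - g x) A = infsum f A - infsum g A"
  using infsum_add[OF assms(1) summable_on_uminus[THEN iffD2, OF assms(2)]] infsum_uminus[of g A]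
  by simp

lemma summable_on_diff':
  fixes f g :: "'a \<Rightarrow> complex"
  assumes "f summable_on A" "g summable_on A"
  shows "(\<lambda>x. f x - g x) summable_on A"
  using summable_on_add[OF assms(1) summable_on_uminus[THEN iffD2, OF assms(2)]] by simp

lemma aux_id: fixes m q z :: complex
  assumes "m \<noteq> 0" "q \<noteq> 0"
  shows "1/q + (z+(q-m))/q^2 - 1/m - z/m^2 = -((q-m)^2) * (1/(m*q^2)) - z*(1/m^2 - 1/q^2)"
  using assms by (simp add: field_simps power2_eq_square)

lemma aux_id2: fixes m p z :: complex
  assumes "m \<noteq> 0" "m + p \<noteq> 0"
  shows "1/(m+p) + (z+p)/(m+p)^2 - 1/m - z/m^2 = -(p^2) * (1/(m*(m+p)^2)) - z*(1/m^2 - 1/(m+p)^2)"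
  using aux_id[OF assms] by simp

lemma aux_bq: fixes m q :: complex
  assumes "m \<noteq> 0" "q \<noteq> 0"
  shows "1 / m\<^sup>2 - 1 / q\<^sup>2 = (q - m) * (2 * m + (q - m)) / (m\<^sup>2 * q\<^sup>2)"
  using assms by (simp add: field_simps power2_eq_square)

lemma aux_b: fixes m p :: complex
  assumes "m \<noteq> 0" "m + p \<noteq> 0"
  shows "1 / m\<^sup>2 - 1 / (m + p)\<^sup>2 = p * (2 * m + p) / (m\<^sup>2 * (m + p)\<^sup>2)"
  using aux_bq[OF assms] by simp

lemma aux_sw: fixes l w :: complex
  assumes "l \<noteq> 0" "w \<noteq> 0"
  shows "1 / w\<^sup>2 - 1 / l\<^sup>2 = (l - w) * (l + w) / (l\<^sup>2 * w\<^sup>2)"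
  using assms by (simp add: field_simps power2_eq_square)

lemma aux_s: fixes l z :: complex
  assumes "l \<noteq> 0" "z - l \<noteq> 0"
  shows "1 / (z - l)\<^sup>2 - 1 / l\<^sup>2 = z * (2 * l - z) / (l\<^sup>2 * (z - l)\<^sup>2)"
  using aux_sw[OF assms] by (simp add: algebra_simps)

context lat
begin

lemma L_shift_summable:
  fixes g :: "complex \<Rightarrow> complex"
  assumes "g summable_on L" "p \<in> L"
  shows "(\<lambda>m. g (m + p)) summable_on L"
proof -
  have "g summable_on L \<longleftrightarrow> (\<lambda>m. g (m + p)) summable_on L"
    by (rule summable_on_reindex_bij_witness[of _ "\<lambda>m. m + p" "\<lambda>l. l - p"])
       (use assms in \<open>auto intro: add_L diff_L\<close>)
  thus ?thesis using assms by simp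
qed

lemma L_shift_infsum:
  fixes g :: "complex \<Rightarrow> complex"
  assumes "p \<in> L"
  shows "infsum g L = infsum (\<lambda>m. g (m + p)) L"
  by (rule infsum_reindex_bij_witness[of _ "\<lambda>m. m + p" "\<lambda>l. l - p"])
     (use assms in \<open>auto intro: add_L diff_L\<close>)

lemma L_split3:
  fixes f :: "complex \<Rightarrow> complex"
  assumes f: "f summable_on L" and p: "p \<in> L" "p \<noteq> 0"
  shows "infsum f L = f 0 + f (- p) + infsum f (L - {0, - p})"
proof -
  have eq: "L = insert 0 (insert (- p) (L - {0, - p}))" using p by auto
  have s1: "f summable_on (L - {0, - p})" by (rule summable_on_subset[OF f]) auto
  have s2: "f summable_on insert (- p) (L - {0, - p})" by (rule summable_on_subset[OF f]) (use p in auto)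
  have "infsum f L = f 0 + infsum f (insert (- p) (L - {0, - p}))"
    by (subst eq, rule infsum_insert[OF s2]) (use p in auto)
  also have "infsum f (insert (- p) (L - {0, - p})) = f (- p) + infsum f (L - {0, - p})"
    by (rule infsum_insert[OF s1]) auto
  finally show ?thesis by simp
qed

definition sP :: "complex \<Rightarrow> complex \<Rightarrow> complex" where
  "sP z l = (if l = 0 then 1 / z\<^sup>2 else 1 / (z - l)\<^sup>2 - 1 / l\<^sup>2)"

definition Wp :: "complex \<Rightarrow> complex" where "Wp z = infsum (sP z) L"

lemma sP_summable:
  assumes z: "z \<notin> L"
  shows "sP z summable_on L"
proof -
  have R: "2 * norm z + 1 > 0" by (intro add_nonneg_pos) auto
  show ?thesis
proof (rule lat_summable[OF subset_refl R, where C="10 * norm z"])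
  fix l assume l: "l \<in> L" "2 * norm z + 1 \<le> norm l"
  have nl: "norm l > 0" using l(2) norm_ge_zero[of z] by linarith
  hence l0: "l \<noteq> 0" by auto
  have lz: "z - l \<noteq> 0" using z l by auto
  have d: "norm (z - l) \<ge> norm l / 2"
    using norm_triangle_ineq2[of l z] l by (simp add: norm_minus_commute)
  have eq: "sP z l = z * (2 * l - z) / (l\<^sup>2 * (z - l)\<^sup>2)"
    using aux_s[OF l0 lz] l0 by (simp add: sP_def mult.commute)
  have n1: "norm (2 * l - z) \<le> 5 / 2 * norm l"
    using norm_triangle_ineq4[of "2 * l" z] l by simp
  have "norm (sP z l) = norm z * norm (2 * l - z) / (norm l ^ 2 * norm (z - l) ^ 2)"
    unfolding eq by (simp add: norm_divide norm_mult norm_power)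
  also have "\<dots> \<le> norm z * (5 / 2 * norm l) / (norm l ^ 2 * (norm l / 2) ^ 2)"
    using d nl n1 by (intro frac_le mult_left_mono mult_pos_pos power_mono) auto
  also have "\<dots> = 10 * norm z / norm l ^ 3" using nl by (simp add: field_simps power2_eq_square power3_eq_cube)
  finally show "norm (sP z l) \<le> 10 * norm z / norm l ^ 3" .
qed
qed

lemma sP_neg: "sP (- z) (- l) = sP z l"
  by (simp add: sP_def power2_eq_square algebra_simps)

lemma Wp_even: "Wp (- z) = Wp z"
  unfolding Wp_def
  by (rule infsum_reindex_bij_witness[of _ uminus uminus]) (auto simp: sP_neg[of "-z", simplified])

definition aS :: "complex \<Rightarrow> complex \<Rightarrow> complex" where "aS p m = 1 / (m * (m + p)\<^sup>2)"
definition bS :: "complex \<Rightarrow> complex \<Rightarrow> complex" where "bS p m = 1 / m\<^sup>2 - 1 / (m + p)\<^sup>2"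

lemma aS_summable:
  assumes p: "p \<in> L"
  shows "aS p summable_on (L - {0, - p})"
proof -
  have R: "2 * norm p + 1 > 0" by (intro add_nonneg_pos) auto
  show ?thesis
proof (rule lat_summable[OF Diff_subset R, where C="4"])
  fix m assume m: "m \<in> L - {0, - p}" "2 * norm p + 1 \<le> norm m"
  have nm: "norm m > 0" using m by auto
  have d: "norm (m + p) \<ge> norm m / 2"
    using norm_diff_ineq[of m p] m by simp
  have "norm (aS p m) = 1 / (norm m * norm (m + p) ^ 2)"
    by (simp add: aS_def norm_divide norm_mult norm_power)
  also have "\<dots> \<le> 1 / (norm m * (norm m / 2) ^ 2)"
    using d nm by (intro divide_left_mono mult_left_mono mult_pos_pos power_mono) auto
  also have "\<dots> = 4 / norm m ^ 3" by (simp add: field_simps power2_eq_square power3_eq_cube)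
  finally show "norm (aS p m) \<le> 4 / norm m ^ 3" .
qed
qed

lemma bS_summable:
  assumes p: "p \<in> L"
  shows "bS p summable_on (L - {0, - p})"
proof -
  have R: "2 * norm p + 1 > 0" by (intro add_nonneg_pos) auto
  show ?thesis
proof (rule lat_summable[OF Diff_subset R, where C="10 * norm p"])
  fix m assume m: "m \<in> L - {0, - p}" "2 * norm p + 1 \<le> norm m"
  have m0: "m \<noteq> 0" "m + p \<noteq> 0" using m by (auto simp: add_eq_0_iff)
  have nm: "norm m > 0" using m by auto
  have d: "norm (m + p) \<ge> norm m / 2"
    using norm_diff_ineq[of m p] m by simp
  have eq: "bS p m = p * (2 * m + p) / (m\<^sup>2 * (m + p)\<^sup>2)"
    using aux_b[OF m0] by (simp add: bS_def)
  have n1: "norm (2 * m + p) \<le> 5 / 2 * norm m"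
    using norm_triangle_ineq[of "2 * m" p] m by simp
  have "norm (bS p m) = norm p * norm (2 * m + p) / (norm m ^ 2 * norm (m + p) ^ 2)"
    unfolding eq by (simp add: norm_divide norm_mult norm_power)
  also have "\<dots> \<le> norm p * (5 / 2 * norm m) / (norm m ^ 2 * (norm m / 2) ^ 2)"
    using d nm n1 by (intro frac_le mult_left_mono mult_pos_pos power_mono) auto
  also have "\<dots> = 10 * norm p / norm m ^ 3" using nm by (simp add: field_simps power2_eq_square power3_eq_cube)
  finally show "norm (bS p m) \<le> 10 * norm p / norm m ^ 3" .
qed
qed

lemma Wp_shift:
  assumes p: "p \<in> L" "p \<noteq> 0" and z: "z \<notin> L"
  shows "Wp (z + p) - Wp z = infsum (bS p) (L - {0, - p})"
proof -
  have zp: "z + p \<notin> L" using z p add_L_iff by blast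
  have s1: "(\<lambda>m. sP (z + p) (m + p)) summable_on L" by (rule L_shift_summable[OF sP_summable[OF zp] p(1)])
  have s2: "sP z summable_on L" by (rule sP_summable[OF z])
  have "Wp (z + p) - Wp z = infsum (\<lambda>m. sP (z + p) (m + p)) L - infsum (sP z) L"
    unfolding Wp_def using L_shift_infsum[OF p(1), of "sP (z + p)"] by simp
  also have "\<dots> = infsum (\<lambda>m. sP (z + p) (m + p) - sP z m) L"
    by (rule infsum_diff'[symmetric, OF s1 s2])
  also have "\<dots> = (sP (z + p) (0 + p) - sP z 0) + (sP (z + p) (- p + p) - sP z (- p))
                  + infsum (\<lambda>m. sP (z + p) (m + p) - sP z m) (L - {0, - p})"
    by (rule L_split3[OF summable_on_diff'[OF s1 s2] p])
  also have "(sP (z + p) (0 + p) - sP z 0) + (sP (z + p) (- p + p) - sP z (- p)) = 0"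
    using p z by (simp add: sP_def)
  also have "infsum (\<lambda>m. sP (z + p) (m + p) - sP z m) (L - {0, - p}) = infsum (bS p) (L - {0, - p})"
  proof (rule infsum_cong)
    fix m assume m: "m \<in> L - {0, - p}"
    hence "m + p \<noteq> 0" "m \<noteq> 0" by (auto simp: add_eq_0_iff)
    thus "sP (z + p) (m + p) - sP z m = bS p m" by (simp add: sP_def bS_def)
  qed
  finally show ?thesis by simp
qed

lemma bS_sum_zero:
  assumes p: "p \<in> L" "p \<noteq> 0" "p / 2 \<notin> L"
  shows "infsum (bS p) (L - {0, - p}) = 0"
proof -
  have z: "- (p / 2) \<notin> L" using p by simp
  have "Wp (- (p / 2) + p) - Wp (- (p / 2)) = infsum (bS p) (L - {0, - p})"
    by (rule Wp_shift[OF p(1,2) z])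
  moreover have "- (p / 2) + p = p / 2" by simp
  ultimately show ?thesis using Wp_even[of "p / 2"] by simp
qed

definition eta :: "complex \<Rightarrow> complex" where
  "eta p = 3 / p - p\<^sup>2 * infsum (aS p) (L - {0, - p})"

definition tZ :: "complex \<Rightarrow> complex \<Rightarrow> complex" where
  "tZ z l = (if l = 0 then 1 / z else hZ z l)"

lemma tZ_summable: "z \<notin> L \<Longrightarrow> tZ z summable_on L"
proof -
  assume z: "z \<notin> L"
  have "tZ z summable_on L0"
    using hZ_summable[OF z] by (rule summable_on_cong[THEN iffD1, rotated]) (auto simp: tZ_def)
  hence X: "tZ z summable_on insert 0 L0" by (rule summable_on_insert_iff[THEN iffD2])
  have e: "insert 0 L0 = L" by (rule insert_Diff[OF zero_L])
  show ?thesis using X unfolding e .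
qed

lemma Zf_tZ: "z \<notin> L \<Longrightarrow> Zf z = infsum (tZ z) L"
proof -
  assume z: "z \<notin> L"
  have s: "tZ z summable_on L0"
    using hZ_summable[OF z] by (rule summable_on_cong[THEN iffD1, rotated]) (auto simp: tZ_def)
  have "insert 0 L0 = L" by auto
  hence "infsum (tZ z) L = infsum (tZ z) (insert 0 L0)" by simp
  also have "\<dots> = tZ z 0 + infsum (tZ z) L0" by (rule infsum_insert[OF s]) auto
  also have "infsum (tZ z) L0 = infsum (hZ z) L0" by (rule infsum_cong) (auto simp: tZ_def)
  finally have eq: "infsum (tZ z) L = tZ z 0 + infsum (hZ z) L0" .
  have t0: "tZ z 0 = 1 / z" by (simp add: tZ_def)
  show ?thesis using eq unfolding Zf_def t0 by simp
qed

lemma Zf_shift: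
  assumes p: "p \<in> L" "p \<noteq> 0" "p / 2 \<notin> L" and z: "z \<notin> L"
  shows "Zf (z + p) - Zf z = eta p"
proof -
  have zp: "z + p \<notin> L" using z p add_L_iff by blast
  have z0: "z \<noteq> 0" "z + p \<noteq> 0" using z zp by auto
  define c where "c = - p\<^sup>2"
  have s1: "(\<lambda>m. tZ (z + p) (m + p)) summable_on L" by (rule L_shift_summable[OF tZ_summable[OF zp] p(1)])
  have s2: "tZ z summable_on L" by (rule tZ_summable[OF z])
  have "Zf (z + p) - Zf z = infsum (\<lambda>m. tZ (z + p) (m + p)) L - infsum (tZ z) L"
    unfolding Zf_tZ[OF z] Zf_tZ[OF zp] using L_shift_infsum[OF p(1), of "tZ (z + p)"] by simp
  also have "\<dots> = infsum (\<lambda>m. tZ (z + p) (m + p) - tZ z m) L"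
    by (rule infsum_diff'[symmetric, OF s1 s2])
  also have "\<dots> = (tZ (z + p) (0 + p) - tZ z 0) + (tZ (z + p) (- p + p) - tZ z (- p))
                  + infsum (\<lambda>m. tZ (z + p) (m + p) - tZ z m) (L - {0, - p})"
    by (rule L_split3[OF summable_on_diff'[OF s1 s2] p(1,2)])
  also have "(tZ (z + p) (0 + p) - tZ z 0) + (tZ (z + p) (- p + p) - tZ z (- p)) = 3 / p"
  proof -
    have "z - p \<noteq> 0 \<or> True" by simp
    have a: "tZ (z + p) (0 + p) - tZ z 0 = 1 / p + (z + p) / p\<^sup>2"
      using p z0 by (simp add: tZ_def hZ_def)
    have b: "tZ (z + p) (- p + p) - tZ z (- p) = 1 / p - z / p\<^sup>2"
      using p z0 by (simp add: tZ_def hZ_def)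
    show ?thesis unfolding a b using p by (simp add: field_simps power2_eq_square)
  qed
  also have "infsum (\<lambda>m. tZ (z + p) (m + p) - tZ z m) (L - {0, - p})
             = infsum (\<lambda>m. c * aS p m - z * bS p m) (L - {0, - p})"
  proof (rule infsum_cong)
    fix m assume m: "m \<in> L - {0, - p}"
    hence m0: "m + p \<noteq> 0" "m \<noteq> 0" by (auto simp: add_eq_0_iff)
    have zm: "z - m \<noteq> 0" using z m by auto
    have zm': "z + p - (m + p) = z - m" by simp
    have "tZ (z + p) (m + p) - tZ z m = 1/(m+p) + (z+p)/(m+p)^2 - 1/m - z/m^2"
      using m0 unfolding tZ_def hZ_def zm' by simp
    also have "\<dots> = (- p\<^sup>2) * aS p m - z * bS p m"
      unfolding aS_def bS_def using aux_id2[OF m0(2,1), of z] by simp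
    finally show "tZ (z + p) (m + p) - tZ z m = c * aS p m - z * bS p m" unfolding c_def .
  qed
  also have "\<dots> = infsum (\<lambda>m. c * aS p m) (L - {0, - p}) - infsum (\<lambda>m. z * bS p m) (L - {0, - p})"
    by (rule infsum_diff'[OF summable_on_cmult_right[OF aS_summable[OF p(1)]]
                             summable_on_cmult_right[OF bS_summable[OF p(1)]]])
  also have "infsum (\<lambda>m. c * aS p m) (L - {0, - p}) = c * infsum (aS p) (L - {0, - p})"
    by (rule infsum_cmult_right) (rule aS_summable[OF p(1)])
  also have "infsum (\<lambda>m. z * bS p m) (L - {0, - p}) = z * infsum (bS p) (L - {0, - p})"
    by (rule infsum_cmult_right) (rule bS_summable[OF p(1)])
  also have "infsum (bS p) (L - {0, - p}) = 0" by (rule bS_sum_zero[OF p])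
  finally show ?thesis by (simp add: eta_def c_def)
qed

end

context lat
begin

lemma sig_cont: "isCont sig z"
  using sig_holo holomorphic_on_imp_continuous_on continuous_on_eq_continuous_at by blast

lemma sig_nonzero_somewhere: "\<exists>z0. sig z0 \<noteq> 0"
proof -
  have "isCont Pi 0"
    using Pi_holo holomorphic_on_imp_continuous_on continuous_on_eq_continuous_at by blast
  then obtain r where r: "r > 0" "\<And>y. dist 0 y < r \<Longrightarrow> Pi y \<noteq> 0"
    using continuous_at_avoid[of 0 Pi 0] Pi_0 by auto
  define z0 where "z0 = complex_of_real (r / 2)"
  have "Pi z0 \<noteq> 0" using r by (intro r(2)) (simp add: z0_def dist_norm)
  moreover have "z0 \<noteq> 0" using r by (simp add: z0_def)
  ultimately show ?thesis by (intro exI[of _ z0]) (simp add: sig_def)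
qed

lemma sig_quasi:
  assumes p: "p \<in> L" "p \<noteq> 0" "p / 2 \<notin> L"
  shows "\<exists>K. K \<noteq> 0 \<and> (\<forall>w. sig (w + p) = K * exp (eta p * w) * sig w)"
proof -
  obtain z0 where z0: "sig z0 \<noteq> 0" using sig_nonzero_somewhere by blast
  obtain \<epsilon> where \<epsilon>: "\<epsilon> > 0" "\<And>y. dist z0 y < \<epsilon> \<Longrightarrow> sig y \<noteq> 0"
    using continuous_at_avoid[OF sig_cont z0] by blast
  define B where "B = ball z0 \<epsilon>"
  have Bnz: "sig w \<noteq> 0" if "w \<in> B" for w using \<epsilon> that by (auto simp: B_def)
  define Q where "Q = (\<lambda>w. sig (w + p) * exp (- (eta p * w)) / sig w)"
  have dQ: "(Q has_field_derivative 0) (at w within B)" if w: "w \<in> B" for w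
  proof -
    have wL: "w \<notin> L" using Bnz[OF w] sig_nz_imp by blast
    have wpL: "w + p \<notin> L" using wL p add_L_iff by blast
    have d1: "((\<lambda>w. sig (w + p)) has_field_derivative sig (w + p) * Zf (w + p)) (at w)"
      using sig_deriv[OF wpL] DERIV_shift by blast
    have d2: "(sig has_field_derivative sig w * Zf w) (at w)" by (rule sig_deriv[OF wL])
    have sh: "Zf (w + p) = Zf w + eta p" using Zf_shift[OF p wL] by (simp add: algebra_simps)
    have d3: "((\<lambda>w. exp (- (eta p * w))) has_field_derivative exp (- (eta p * w)) * (- eta p)) (at w)"
      by (auto intro!: derivative_eq_intros)
    have "(Q has_field_derivative
            ((sig (w + p) * Zf (w + p) * exp (- (eta p * w)) + exp (- (eta p * w)) * (- eta p) * sig (w + p)) * sig w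
             - sig (w + p) * exp (- (eta p * w)) * (sig w * Zf w)) / (sig w * sig w)) (at w)"
      unfolding Q_def by (rule DERIV_divide[OF DERIV_mult[OF d1 d3] d2 Bnz[OF w]])
    moreover have "((sig (w + p) * Zf (w + p) * exp (- (eta p * w)) + exp (- (eta p * w)) * (- eta p) * sig (w + p)) * sig w
             - sig (w + p) * exp (- (eta p * w)) * (sig w * Zf w)) / (sig w * sig w) = 0"
      unfolding sh by (simp add: algebra_simps)
    ultimately show ?thesis by (auto intro: has_field_derivative_at_within)
  qed
  obtain K where K: "\<And>w. w \<in> B \<Longrightarrow> Q w = K"
    using has_field_derivative_zero_constant[of B Q] dQ by (auto simp: B_def)
  have eqB: "sig (w + p) - K * exp (eta p * w) * sig w = 0" if w: "w \<in> B" for w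
  proof -
    have "sig (w + p) * exp (- (eta p * w)) / sig w = K" using K[OF w] by (simp add: Q_def)
    hence "sig (w + p) * exp (- (eta p * w)) = K * sig w" using Bnz[OF w] by (simp add: field_simps)
    hence "sig (w + p) * exp (- (eta p * w)) * exp (eta p * w) = K * sig w * exp (eta p * w)" by simp
    hence "sig (w + p) = K * sig w * exp (eta p * w)" by (simp add: exp_minus field_simps)
    thus ?thesis by (simp add: algebra_simps)
  qed
  have hol: "(\<lambda>w. sig (w + p) - K * exp (eta p * w) * sig w) holomorphic_on UNIV"
    by (intro holomorphic_intros holomorphic_on_compose_gen[of "\<lambda>w. w + p" UNIV sig UNIV, unfolded o_def]
              sig_holo) auto
  have all: "sig (w + p) - K * exp (eta p * w) * sig w = 0" for w
    by (rule analytic_continuation_open[where f="\<lambda>w. sig (w + p) - K * exp (eta p * w) * sig w"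
           and g="\<lambda>w. 0" and s=B and s'=UNIV])
       (use \<epsilon> eqB hol in \<open>auto simp: B_def\<close>)
  have "K \<noteq> 0"
  proof
    assume "K = 0"
    hence "sig ((z0 - p) + p) = 0" using all[of "z0 - p"] by simp
    thus False using z0 by simp
  qed
  thus ?thesis using all by (intro exI[of _ K]) (auto simp: algebra_simps)
qed

end

lemma norm_shift_int:
  fixes g :: "complex \<Rightarrow> complex"
  assumes sh: "\<And>z. norm (g (z + p)) = norm (g z)"
  shows "norm (g (z + of_int m * p)) = norm (g z)"
proof -
  have nat: "norm (g (y + of_nat n * p)) = norm (g y)" for y n
  proof (induction n)
    case (Suc n)
    have "g (y + of_nat (Suc n) * p) = g ((y + of_nat n * p) + p)" by (simp add: algebra_simps)
    thus ?case using sh[of "y + of_nat n * p"] Suc by simp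
  qed simp
  show ?thesis
  proof (cases "m \<ge> 0")
    case True
    then obtain n where "m = int n" by (metis nonneg_int_cases)
    thus ?thesis using nat[of z n] by simp
  next
    case False
    obtain n where n: "m = - int n" using False by (intro that[of "nat (- m)"]) simp
    have "norm (g ((z - of_nat n * p) + of_nat n * p)) = norm (g (z - of_nat n * p))" by (rule nat)
    thus ?thesis using n by simp
  qed
qed

context lat
begin

lemma half_not_L:
  assumes "p = p1 \<or> p = p2"
  shows "p / 2 \<notin> L"
proof
  assume "p / 2 \<in> L"
  then obtain m n where mn: "p / 2 = of_int m * p1 + of_int n * p2" by (auto simp: lattice_mem)
  show False using assms
  proof
    assume p: "p = p1"
    have "of_real (1/2 - of_int m) * p1 + of_real (- of_int n) * p2 = 0"
      using mn p by (simp add: algebra_simps)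
    hence "cL * (\<bar>1/2 - of_int m\<bar> + \<bar>- of_int n\<bar>) \<le> 0"
      using coercive_real[of "1/2 - of_int m" "- of_int n"] by simp
    hence "\<bar>1/2 - real_of_int m\<bar> + \<bar>- real_of_int n\<bar> \<le> 0" using cL_pos
      by (simp add: mult_le_0_iff)
    hence "real_of_int m = 1/2" by linarith
    hence "2 * real_of_int m = 1" by simp
    hence "2 * m = 1" by linarith
    thus False by presburger
  next
    assume p: "p = p2"
    have "of_real (- of_int m) * p1 + of_real (1/2 - of_int n) * p2 = 0"
      using mn p by (simp add: algebra_simps)
    hence "cL * (\<bar>- of_int m\<bar> + \<bar>1/2 - of_int n\<bar>) \<le> 0"
      using coercive_real[of "- of_int m" "1/2 - of_int n"] by simp
    hence "\<bar>- real_of_int m\<bar> + \<bar>1/2 - real_of_int n\<bar> \<le> 0" using cL_pos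
      by (simp add: mult_le_0_iff)
    hence "real_of_int n = 1/2" by linarith
    hence "2 * real_of_int n = 1" by simp
    hence "2 * n = 1" by linarith
    thus False by presburger
  qed
qed

lemma real_coords: "\<exists>s t. z = of_real s * p1 + of_real t * p2"
proof -
  define q where "q = p2 / p1"
  have q: "Im q \<noteq> 0" using Im_nz q_def by simp
  define t where "t = Im (z / p1) / Im q"
  define s where "s = Re (z / p1) - t * Re q"
  have "of_real s + of_real t * q = z / p1"
    using q by (simp add: complex_eq_iff s_def t_def)
  hence "(of_real s + of_real t * q) * p1 = z" using p1_nz by simp
  hence "z = of_real s * p1 + of_real t * p2" using p1_nz by (simp add: q_def algebra_simps)
  thus ?thesis by blast
qed

lemma eta_det: "p1 * eta p2 \<noteq> p2 * eta p1"
proof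
  assume eq: "p1 * eta p2 = p2 * eta p1"
  obtain K1 where K1: "\<And>w. sig (w + p1) = K1 * exp (eta p1 * w) * sig w"
    using sig_quasi[OF p1_L p1_nz half_not_L] by blast
  obtain K2 where K2: "\<And>w. sig (w + p2) = K2 * exp (eta p2 * w) * sig w"
    using sig_quasi[OF p2_L p2_nz half_not_L] by blast
  define \<kappa> where "\<kappa> = eta p1 / p1"
  have e1: "eta p1 = \<kappa> * p1" using p1_nz by (simp add: \<kappa>_def)
  have e2: "eta p2 = \<kappa> * p2" using p1_nz eq by (simp add: \<kappa>_def field_simps)
  define \<phi> where "\<phi> = (\<lambda>z. sig z * exp (- (\<kappa> * z\<^sup>2 / 2)))"
  have \<phi>odd: "\<phi> (- z) = - \<phi> z" for z by (simp add: \<phi>_def sig_odd)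
  obtain z0 where z0: "sig z0 \<noteq> 0" using sig_nonzero_somewhere by blast
  have \<phi>z0: "\<phi> z0 \<noteq> 0" using z0 by (simp add: \<phi>_def)
  have shift: "norm (\<phi> (z + p)) = norm (\<phi> z)" if K: "\<And>w. sig (w + p) = K * exp (\<kappa> * p * w) * sig w" for p K z
  proof -
    define M where "M = K * exp (- (\<kappa> * p\<^sup>2 / 2))"
    have ex: "exp (\<kappa> * p * w) * exp (- (\<kappa> * (w + p)\<^sup>2 / 2)) = exp (- (\<kappa> * w\<^sup>2 / 2)) * exp (- (\<kappa> * p\<^sup>2 / 2))" for w
    proof -
      have "\<kappa> * p * w + - (\<kappa> * (w + p)\<^sup>2 / 2) = - (\<kappa> * w\<^sup>2 / 2) + - (\<kappa> * p\<^sup>2 / 2)"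
        by (simp add: power2_eq_square field_simps)
      thus ?thesis unfolding exp_add[symmetric] by simp
    qed
    have Mf: "\<phi> (w + p) = M * \<phi> w" for w
    proof -
      have "\<phi> (w + p) = K * sig w * (exp (\<kappa> * p * w) * exp (- (\<kappa> * (w + p)\<^sup>2 / 2)))"
        by (simp add: \<phi>_def K mult_ac)
      also have "\<dots> = M * \<phi> w" unfolding ex by (simp add: M_def \<phi>_def mult_ac)
      finally show ?thesis .
    qed
    have "\<phi> (- z0) = M * \<phi> (- z0 - p)" using Mf[of "- z0 - p"] by simp
    also have "- z0 - p = - (z0 + p)" by simp
    also have "\<phi> (- (z0 + p)) = - \<phi> (z0 + p)" by (rule \<phi>odd)
    also have "\<phi> (z0 + p) = M * \<phi> z0" by (rule Mf)
    finally have "- \<phi> z0 = - (M * M * \<phi> z0)" using \<phi>odd[of z0] by (simp add: mult_ac)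
    hence "M * M = 1" using \<phi>z0 by simp
    hence "norm M * norm M = 1" by (metis norm_mult norm_one)
    hence "norm M = 1" by (metis abs_norm_cancel abs_square_eq_1 power2_eq_square)
    thus ?thesis by (simp add: Mf norm_mult)
  qed
  have sh1: "norm (\<phi> (z + p1)) = norm (\<phi> z)" for z
    by (rule shift[of p1 K1]) (simp add: K1 e1)
  have sh2: "norm (\<phi> (z + p2)) = norm (\<phi> z)" for z
    by (rule shift[of p2 K2]) (simp add: K2 e2)
  have latt: "norm (\<phi> (w + of_int m * p1 + of_int n * p2)) = norm (\<phi> w)" for w m n
    using norm_shift_int[of \<phi> p2, OF sh2, of "w + of_int m * p1" n]
          norm_shift_int[of \<phi> p1, OF sh1, of w m] by simp
  have hol: "\<phi> holomorphic_on UNIV" unfolding \<phi>_def by (intro holomorphic_intros sig_holo) auto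
  define P where "P = (\<lambda>(s,t). of_real s * p1 + of_real t * p2) ` ({0..1::real} \<times> {0..1::real})"
  have "compact P" unfolding P_def
    by (intro compact_continuous_image compact_Times compact_Icc)
       (auto simp: case_prod_unfold intro!: continuous_intros)
  hence "compact (\<phi> ` P)"
    by (rule compact_continuous_image[rotated])
       (use hol holomorphic_on_imp_continuous_on continuous_on_subset in blast)
  then obtain B where B: "\<And>y. y \<in> \<phi> ` P \<Longrightarrow> norm y \<le> B"
    using compact_imp_bounded bounded_iff by metis
  have "bounded (range \<phi>)"
    unfolding bounded_iff
  proof (intro exI[of _ B] ballI)
    fix y assume "y \<in> range \<phi>"
    then obtain z where z: "y = \<phi> z" by blast
    obtain s t where st: "z = of_real s * p1 + of_real t * p2" using real_coords by blast
    define w where "w = of_real (s - of_int \<lfloor>s\<rfloor>) * p1 + of_real (t - of_int \<lfloor>t\<rfloor>) * p2"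
    have a1: "0 \<le> s - of_int \<lfloor>s\<rfloor>" using of_int_floor_le[of s] by linarith
    have a2: "s - of_int \<lfloor>s\<rfloor> \<le> 1" using real_of_int_floor_add_one_gt[of s] by linarith
    have b1: "0 \<le> t - of_int \<lfloor>t\<rfloor>" using of_int_floor_le[of t] by linarith
    have b2: "t - of_int \<lfloor>t\<rfloor> \<le> 1" using real_of_int_floor_add_one_gt[of t] by linarith
    have mem: "(s - of_int \<lfloor>s\<rfloor>, t - of_int \<lfloor>t\<rfloor>) \<in> {0..1::real} \<times> {0..1::real}"
      using a1 a2 b1 b2 by simp
    have wP: "w \<in> P" unfolding P_def w_def
      by (rule image_eqI[OF _ mem]) simp
    have "z = w + of_int \<lfloor>s\<rfloor> * p1 + of_int \<lfloor>t\<rfloor> * p2"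
      by (simp add: st w_def algebra_simps)
    hence "norm y = norm (\<phi> w)" using latt z by simp
    also have "\<dots> \<le> B" using B wP by blast
    finally show "norm y \<le> B" .
  qed
  hence "\<phi> constant_on UNIV" by (rule Liouville_theorem[OF hol])
  hence "\<phi> z0 = \<phi> 0" by (auto simp: constant_on_def)
  also have "\<phi> 0 = 0" by (simp add: \<phi>_def sig_def)
  finally show False using \<phi>z0 by simp
qed

end

lemma cosparse_shift:
  fixes P :: "complex \<Rightarrow> bool"
  assumes "eventually P (cosparse UNIV)"
  shows "eventually (\<lambda>z. P (z + p)) (cosparse UNIV)"
proof -
  have ev: "\<And>x. eventually P (at x)" using assms by (simp add: eventually_cosparse_open_eq)
  have "eventually (\<lambda>z. P (z + p)) (at x)" for x
  proof -
    have "filtermap (\<lambda>z. z + p) (at x) = at (x + p)" using filtermap_at_shift[of "- p" x] by simp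
    hence "eventually P (filtermap (\<lambda>z. z + p) (at x))" using ev by simp
    thus ?thesis by (simp add: eventually_filtermap)
  qed
  thus ?thesis by (simp add: eventually_cosparse_open_eq)
qed

lemma open_subset_real_empty:
  fixes S :: "complex set"
  assumes "open S" "S \<subseteq> \<real>" "y \<in> S"
  shows False
proof -
  obtain e where e: "e > 0" "ball y e \<subseteq> S" using assms open_contains_ball by blast
  have "y + \<i> * of_real (e / 2) \<in> ball y e" using e by (simp add: dist_norm norm_mult)
  hence "y + \<i> * of_real (e / 2) \<in> \<real>" using e assms by blast
  moreover have "y \<in> \<real>" using assms by blast
  ultimately have "Im (y + \<i> * of_real (e / 2)) = 0" "Im y = 0" by (auto simp: complex_is_Real_iff)
  thus False using e by simp
qed

lemma phase_mult:
  fixes f :: "complex \<Rightarrow> complex"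
  assumes f: "f nicely_meromorphic_on UNIV" and nc: "\<not> (\<exists>c. \<forall>z. f z = c)"
      and per: "is_phase_period f p"
  shows "\<exists>c::real. c > 0 \<and> (\<forall>z. f (z + p) = of_real c * f z)"
proof -
  have mero: "f meromorphic_on UNIV" using f by (simp add: nicely_meromorphic_on_def)
  have nz: "\<forall>\<^sub>\<approx>z. f z \<noteq> 0"
    using nicely_meromorphic_imp_constant_or_avoid[OF f open_UNIV connected_UNIV, of 0] nc by auto
  have an: "\<forall>\<^sub>\<approx>z. f analytic_on {z}" by (rule meromorphic_on_imp_analytic_cosparse[OF mero])
  have "\<forall>\<^sub>\<approx>z. f z \<noteq> 0 \<and> f analytic_on {z} \<and> f (z + p) \<noteq> 0 \<and> f analytic_on {z + p}"
    using nz an cosparse_shift[OF nz, of p] cosparse_shift[OF an, of p] by eventually_elim auto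
  then obtain z0 where z0: "f z0 \<noteq> 0" "f analytic_on {z0}" "f (z0 + p) \<noteq> 0" "f analytic_on {z0 + p}"
    using eventually_happens'[of "cosparse (UNIV :: complex set)"] by auto
  obtain r1 where r1: "r1 > 0" "f holomorphic_on ball z0 r1" using z0(2) analytic_at_ball by blast
  obtain r2 where r2: "r2 > 0" "f holomorphic_on ball (z0 + p) r2" using z0(4) analytic_at_ball by blast
  obtain r3 where r3: "r3 > 0" "\<And>y. dist z0 y < r3 \<Longrightarrow> f y \<noteq> 0"
    using continuous_at_avoid[OF analytic_at_imp_isCont[OF z0(2)] z0(1)] by blast
  obtain r4 where r4: "r4 > 0" "\<And>y. dist (z0 + p) y < r4 \<Longrightarrow> f y \<noteq> 0"
    using continuous_at_avoid[OF analytic_at_imp_isCont[OF z0(4)] z0(3)] by blast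
  define r where "r = min (min r1 r2) (min r3 r4)"
  have r: "r > 0" using r1 r2 r3 r4 by (simp add: r_def)
  define U where "U = ball z0 r"
  have U: "open U" "connected U" "z0 \<in> U" using r by (auto simp: U_def)
  have hf: "f holomorphic_on U" by (rule holomorphic_on_subset[OF r1(2)]) (auto simp: U_def r_def)
  have hfp: "(\<lambda>z. f (z + p)) holomorphic_on U"
  proof -
    have "(f \<circ> (\<lambda>z. z + p)) holomorphic_on U"
    proof (rule holomorphic_on_compose_gen[OF _ r2(2)])
      show "(\<lambda>z. z + p) holomorphic_on U" by (intro holomorphic_intros)
      show "(\<lambda>z. z + p) ` U \<subseteq> ball (z0 + p) r2" by (auto simp: U_def r_def dist_norm)
    qed
    thus ?thesis by (simp add: o_def)
  qed
  have nzU: "f z \<noteq> 0" "f (z + p) \<noteq> 0" if "z \<in> U" for z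
    using that r3(2)[of z] r4(2)[of "z + p"] by (auto simp: U_def r_def dist_norm)
  define h where "h = (\<lambda>z. f (z + p) / f z)"
  have hh: "h holomorphic_on U" unfolding h_def using hf hfp nzU by (intro holomorphic_intros) auto
  have hreal: "h z = of_real (norm (f (z + p)) / norm (f z))" if z: "z \<in> U" for z
  proof -
    have "f analytic_on U" using hf U by (simp add: analytic_on_open)
    hence "f analytic_on {z}" using z analytic_on_subset by blast
    hence np1: "\<not> is_pole f z" by (rule analytic_at_imp_no_pole)
    have "(\<lambda>z. f (z + p)) analytic_on U" using hfp U by (simp add: analytic_on_open)
    hence "(\<lambda>z. f (z + p)) analytic_on {z}" using z analytic_on_subset by blast
    hence "\<not> is_pole (\<lambda>z. f (z + p)) z" by (rule analytic_at_imp_no_pole)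
    moreover have "is_pole (\<lambda>z. f (z + p)) z \<longleftrightarrow> is_pole f (z + p)"
      using is_pole_shift_iff[of f p z] by (simp add: o_def add.commute)
    ultimately have np2: "\<not> is_pole f (z + p)" by simp
    have "z \<in> phase_domain f" "z + p \<in> phase_domain f" using np1 np2 nzU[OF z] by (auto simp: phase_domain_def)
    hence "phase f (z + p) = phase f z" using per by (auto simp: is_phase_period_def)
    hence "f (z + p) / of_real (norm (f (z + p))) = f z / of_real (norm (f z))" by (simp add: phase_def)
    thus ?thesis using nzU[OF z] by (simp add: h_def field_simps)
  qed
  define c where "c = norm (f (z0 + p)) / norm (f z0)"
  have c: "c > 0" using z0 by (simp add: c_def)
  have hconst: "h constant_on U"
  proof (rule ccontr)
    assume "\<not> h constant_on U"
    hence "open (h ` U)" by (intro open_mapping_thm[OF hh U(1,2) U(1)]) auto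
    moreover have "h ` U \<subseteq> \<real>" using hreal by auto
    ultimately show False using open_subset_real_empty U(3) by blast
  qed
  have hc: "h z = of_real c" if "z \<in> U" for z
  proof -
    obtain k where "\<And>z. z \<in> U \<Longrightarrow> h z = k" using hconst by (auto simp: constant_on_def)
    hence "h z = h z0" using that U(3) by metis
    thus ?thesis using hreal[OF U(3)] by (simp add: c_def)
  qed
  define G where "G = (\<lambda>z. f (z + p) - of_real c * f z)"
  have G0: "G z = 0" if "z \<in> U" for z
    using hc[OF that] nzU[OF that] by (simp add: G_def h_def field_simps)
  have Gmero: "G meromorphic_on UNIV"
  proof -
    have "(\<lambda>w. f (w + p)) meromorphic_on UNIV"
      by (rule meromorphic_on_compose[OF mero]) (auto intro: analytic_intros)
    thus ?thesis unfolding G_def by (intro meromorphic_intros mero)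
  qed
  have Gev: "\<forall>\<^sub>\<approx>z. G z = 0"
  proof -
    have "(\<forall>\<^sub>\<approx>z. G z = 0) \<or> (\<forall>\<^sub>\<approx>z. G z \<noteq> 0)"
      by (rule meromorphic_imp_constant_or_avoid[OF Gmero open_UNIV connected_UNIV])
    moreover have "\<not> (\<forall>\<^sub>\<approx>z. G z \<noteq> 0)"
    proof
      assume "\<forall>\<^sub>\<approx>z. G z \<noteq> 0"
      hence "eventually (\<lambda>z. G z \<noteq> 0) (at z0)" by (simp add: eventually_cosparse_open_eq)
      moreover have "eventually (\<lambda>z. z \<in> U) (at z0)" by (rule eventually_at_in_open'[OF U(1,3)])
      ultimately have "eventually (\<lambda>z. False) (at z0)" by eventually_elim (use G0 in auto)
      thus False by (simp add: trivial_limit_def[symmetric])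
    qed
    ultimately show ?thesis by blast
  qed
  have "f (z + p) = of_real c * f z" for z
  proof -
    have evz: "eventually (\<lambda>w. f (w + p) = of_real c * f w) (at z)"
      using Gev by (simp add: eventually_cosparse_open_eq G_def)
    have "is_pole (\<lambda>w. f (w + p)) z \<longleftrightarrow> is_pole (\<lambda>w. of_real c * f w) z"
      by (rule is_pole_cong[OF evz refl])
    also have "\<dots> \<longleftrightarrow> is_pole f z" using c by simp
    finally have pe: "is_pole f (z + p) \<longleftrightarrow> is_pole f z"
      using is_pole_shift_iff[of f p z] by (simp add: o_def add.commute)
    show ?thesis
    proof (cases "is_pole f z")
      case True
      hence "f z = 0" "f (z + p) = 0" using pe is_pole_zero_at_nicely_mero[OF f] by auto
      thus ?thesis by simp
    next
      case False
      hence np: "\<not> is_pole f (z + p)" using pe by simp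
      have l1: "f \<midarrow>z\<rightarrow> f z" using f False by (auto simp: nicely_meromorphic_on_def)
      have l2: "f \<midarrow>(z + p)\<rightarrow> f (z + p)" using f np by (auto simp: nicely_meromorphic_on_def)
      have "(\<lambda>w. f (w + p)) \<midarrow>(z + p - p)\<rightarrow> f (z + p)" by (rule LIM_offset[OF l2])
      hence "(\<lambda>w. f (w + p) - of_real c * f w) \<midarrow>z\<rightarrow> f (z + p) - of_real c * f z"
        by (intro tendsto_intros l1) simp
      moreover have "(\<lambda>w. f (w + p) - of_real c * f w) \<midarrow>z\<rightarrow> 0"
        by (rule tendsto_eventually) (use evz in \<open>eventually_elim, simp\<close>)
      ultimately have "f (z + p) - of_real c * f z = 0" using LIM_unique by blast
      thus ?thesis by simp
    qed
  qed
  thus ?thesis using c by blast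
qed

lemma solve2:
  fixes p1 p2 e1 e2 l1 l2 D :: complex
  assumes D: "D = p1 * e2 - p2 * e1" "D \<noteq> 0"
  shows "(l1 * e2 - l2 * e1) / D * p1 + e1 * ((p1 * l2 - p2 * l1) / D) = l1"
    and "(l1 * e2 - l2 * e1) / D * p2 + e2 * ((p1 * l2 - p2 * l1) / D) = l2"
proof -
  have "(l1 * e2 - l2 * e1) / D * p1 + e1 * ((p1 * l2 - p2 * l1) / D)
        = ((l1 * e2 - l2 * e1) * p1 + e1 * (p1 * l2 - p2 * l1)) / D"
    by (simp add: add_divide_distrib)
  also have "(l1 * e2 - l2 * e1) * p1 + e1 * (p1 * l2 - p2 * l1) = l1 * D"
    unfolding D(1) by (simp add: algebra_simps)
  finally show "(l1 * e2 - l2 * e1) / D * p1 + e1 * ((p1 * l2 - p2 * l1) / D) = l1" using D(2) by simp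
  have "(l1 * e2 - l2 * e1) / D * p2 + e2 * ((p1 * l2 - p2 * l1) / D)
        = ((l1 * e2 - l2 * e1) * p2 + e2 * (p1 * l2 - p2 * l1)) / D"
    by (simp add: add_divide_distrib)
  also have "(l1 * e2 - l2 * e1) * p2 + e2 * (p1 * l2 - p2 * l1) = l2 * D"
    unfolding D(1) by (simp add: algebra_simps)
  finally show "(l1 * e2 - l2 * e1) / D * p2 + e2 * ((p1 * l2 - p2 * l1) / D) = l2" using D(2) by simp
qed

context lat
begin

lemma sigma_sig: "weierstrass_sigma L z = sig z"
  by (simp add: sigma_eq sig_def)

lemma v_eta: "v_term L \<xi>0 p = - \<xi>0 * eta p"
proof -
  have "aS p = (\<lambda>l. 1 / (l * (l + p)\<^sup>2))" by (rule ext) (simp add: aS_def)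
  thus ?thesis by (simp add: v_term_def eta_def algebra_simps)
qed

lemma sig_ev_nz: "\<forall>\<^sub>\<approx>z. sig z \<noteq> 0"
proof -
  have "sig meromorphic_on UNIV"
    using sig_holo by (simp add: analytic_on_open[symmetric] analytic_on_imp_meromorphic_on)
  hence "(\<forall>\<^sub>\<approx>z. sig z = 0) \<or> (\<forall>\<^sub>\<approx>z. sig z \<noteq> 0)"
    by (rule meromorphic_imp_constant_or_avoid[OF _ open_UNIV connected_UNIV])
  moreover have "\<not> (\<forall>\<^sub>\<approx>z. sig z = 0)"
  proof
    assume "\<forall>\<^sub>\<approx>z. sig z = 0"
    obtain z0 where z0: "sig z0 \<noteq> 0" using sig_nonzero_somewhere by blast
    have "eventually (\<lambda>z. sig z = 0) (at z0)" using \<open>\<forall>\<^sub>\<approx>z. sig z = 0\<close>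
      by (simp add: eventually_cosparse_open_eq)
    hence "sig \<midarrow>z0\<rightarrow> 0" by (rule tendsto_eventually)
    moreover have "sig \<midarrow>z0\<rightarrow> sig z0" using sig_cont isCont_def by blast
    ultimately show False using z0 LIM_unique by blast
  qed
  ultimately show ?thesis by blast
qed

end

theorem mainTheorem2:
  fixes f :: "complex \<Rightarrow> complex" and p1 p2 :: complex
  assumes "f nicely_meromorphic_on UNIV"
    and "\<not> (\<exists>c. \<forall>z. f z = c)"
    and "phase_doubly_periodic f p1 p2"
  shows "\<exists>g \<xi>0 a (m1::int) (m2::int).
           elliptic g p1 p2 \<and>
           (\<forall>\<^sub>\<approx>z. f z = exp (a * z) * g z * weierstrass_sigma (lattice p1 p2) z
                              / weierstrass_sigma (lattice p1 p2) (- \<xi>0 + z)) \<and>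
           Im (a * p1) = Im (v_term (lattice p1 p2) \<xi>0 p1) + 2 * of_int m1 * pi \<and>
           Im (a * p2) = Im (v_term (lattice p1 p2) \<xi>0 p2) + 2 * of_int m2 * pi"
proof -
  note f = assms(1) and nc = assms(2)
  have indep: "p2 / p1 \<notin> \<real>" and per: "{p. is_phase_period f p} = lattice p1 p2"
    using assms(3) by (auto simp: phase_doubly_periodic_def)
  interpret lat p1 p2 by unfold_locales (rule indep)
  have pp1: "is_phase_period f p1" using per p1_L by blast
  have pp2: "is_phase_period f p2" using per p2_L by blast
  obtain c1 where c1: "c1 > 0" "\<And>z. f (z + p1) = of_real c1 * f z" using phase_mult[OF f nc pp1] by blast
  obtain c2 where c2: "c2 > 0" "\<And>z. f (z + p2) = of_real c2 * f z" using phase_mult[OF f nc pp2] by blast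
  obtain K1 where K1: "K1 \<noteq> 0" "\<And>w. sig (w + p1) = K1 * exp (eta p1 * w) * sig w"
    using sig_quasi[OF p1_L p1_nz half_not_L] by blast
  obtain K2 where K2: "K2 \<noteq> 0" "\<And>w. sig (w + p2) = K2 * exp (eta p2 * w) * sig w"
    using sig_quasi[OF p2_L p2_nz half_not_L] by blast
  define D where "D = p1 * eta p2 - p2 * eta p1"
  have D: "D \<noteq> 0" using eta_det by (simp add: D_def)
  define l1 where "l1 = complex_of_real (ln c1)"
  define l2 where "l2 = complex_of_real (ln c2)"
  define a where "a = (l1 * eta p2 - l2 * eta p1) / D"
  define \<xi>0 where "\<xi>0 = (p1 * l2 - p2 * l1) / D"
  have s1: "a * p1 + eta p1 * \<xi>0 = l1"
    unfolding a_def \<xi>0_def by (rule solve2(1)[OF D_def D])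
  have s2: "a * p2 + eta p2 * \<xi>0 = l2"
    unfolding a_def \<xi>0_def by (rule solve2(2)[OF D_def D])
  have e1: "exp (a * p1 + eta p1 * \<xi>0) = of_real c1" using c1 by (simp add: s1 l1_def exp_of_real)
  have e2: "exp (a * p2 + eta p2 * \<xi>0) = of_real c2" using c2 by (simp add: s2 l2_def exp_of_real)
  define g where "g = (\<lambda>z. f z * exp (- (a * z)) * sig (- \<xi>0 + z) / sig z)"
  have gper: "g (z + p) = g z"
    if c: "\<And>z. f (z + p) = of_real c * f z" and K: "K \<noteq> 0" "\<And>w. sig (w + p) = K * exp (eta p * w) * sig w"
       and e: "exp (a * p + eta p * \<xi>0) = of_real c" for p c K z
  proof -
    have sz: "sig (z + p) = K * exp (eta p * z) * sig z" by (rule K(2))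
    have sx: "sig (- \<xi>0 + (z + p)) = K * exp (eta p * (- \<xi>0 + z)) * sig (- \<xi>0 + z)"
    proof -
      have e: "- \<xi>0 + (z + p) = (- \<xi>0 + z) + p" by (simp add: algebra_simps)
      show ?thesis unfolding e by (rule K(2))
    qed
    have ex: "exp (- (a * (z + p))) * exp (eta p * (- \<xi>0 + z)) * of_real c = exp (- (a * z)) * exp (eta p * z)"
    proof -
      have "exp (- (a * (z + p))) * exp (eta p * (- \<xi>0 + z)) * exp (a * p + eta p * \<xi>0)
            = exp (- (a * (z + p)) + eta p * (- \<xi>0 + z) + (a * p + eta p * \<xi>0))"
        by (simp only: exp_add)
      also have "- (a * (z + p)) + eta p * (- \<xi>0 + z) + (a * p + eta p * \<xi>0) = - (a * z) + eta p * z"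
        by (simp add: algebra_simps)
      finally have X: "exp (- (a * (z + p))) * exp (eta p * (- \<xi>0 + z)) * exp (a * p + eta p * \<xi>0)
                       = exp (- (a * z) + eta p * z)" .
      show ?thesis using X unfolding e by (simp only: exp_add)
    qed
    show ?thesis
    proof (cases "sig z = 0")
      case True thus ?thesis by (simp add: g_def sz)
    next
      case False
      have "g (z + p) = f (z + p) * exp (- (a * (z + p))) * sig (- \<xi>0 + (z + p)) / sig (z + p)"
        by (simp only: g_def)
      also have "\<dots> = of_real c * f z * exp (- (a * (z + p))) * (K * exp (eta p * (- \<xi>0 + z)) * sig (- \<xi>0 + z))
                        / (K * exp (eta p * z) * sig z)"
        by (simp only: c sx sz)
      also have "\<dots> = K * (f z * (exp (- (a * (z + p))) * exp (eta p * (- \<xi>0 + z)) * of_real c) * sig (- \<xi>0 + z))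
                        / (K * (exp (eta p * z) * sig z))"
        by (simp only: mult_ac)
      also have "\<dots> = f z * (exp (- (a * (z + p))) * exp (eta p * (- \<xi>0 + z)) * of_real c) * sig (- \<xi>0 + z)
                        / (exp (eta p * z) * sig z)"
        using K(1) by (rule mult_divide_mult_cancel_left)
      also have "\<dots> = f z * (exp (- (a * z)) * exp (eta p * z)) * sig (- \<xi>0 + z) / (exp (eta p * z) * sig z)"
        by (simp only: ex)
      also have "\<dots> = g z" using False by (simp add: g_def)
      finally show ?thesis .
    qed
  qed
  have mero_g: "g meromorphic_on UNIV"
  proof -
    have an: "sig analytic_on UNIV" using sig_holo by (simp add: analytic_on_open)
    have "(sig \<circ> (\<lambda>z. - \<xi>0 + z)) analytic_on UNIV"
      by (rule analytic_on_compose_gen[OF _ an]) (auto intro: analytic_intros)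
    hence an2: "(\<lambda>z. sig (- \<xi>0 + z)) analytic_on UNIV" by (simp add: o_def)
    have fm: "f meromorphic_on UNIV" using f by (simp add: nicely_meromorphic_on_def)
    show ?thesis unfolding g_def
      by (intro meromorphic_intros fm analytic_on_imp_meromorphic_on an an2 analytic_intros)
  qed
  have ell: "elliptic g p1 p2"
    unfolding elliptic_def
    using mero_g gper[OF c1(2) K1 e1] gper[OF c2(2) K2 e2] by auto
  have ev: "\<forall>\<^sub>\<approx>z. f z = exp (a * z) * g z * weierstrass_sigma (lattice p1 p2) z
                       / weierstrass_sigma (lattice p1 p2) (- \<xi>0 + z)"
  proof -
    have "\<forall>\<^sub>\<approx>z. sig (z + (- \<xi>0)) \<noteq> 0" by (rule cosparse_shift[OF sig_ev_nz])
    with sig_ev_nz show ?thesis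
    proof eventually_elim
      case (elim z)
      have "exp (a * z) * exp (- (a * z)) = 1" by (simp add: exp_minus)
      hence "exp (a * z) * g z * sig z / sig (- \<xi>0 + z) = f z"
        using elim by (simp add: g_def field_simps add.commute)
      thus ?case by (simp add: sigma_sig)
    qed
  qed
  have im1: "Im (a * p1) = Im (v_term (lattice p1 p2) \<xi>0 p1) + 2 * of_int (0::int) * pi"
  proof -
    have A: "a * p1 = l1 + (- \<xi>0 * eta p1)" using s1 by (simp add: algebra_simps)
    have "Im (a * p1) = Im (- \<xi>0 * eta p1)" unfolding A by (simp add: l1_def)
    thus ?thesis by (simp only: v_eta)
  qed
  have im2: "Im (a * p2) = Im (v_term (lattice p1 p2) \<xi>0 p2) + 2 * of_int (0::int) * pi"
  proof -
    have A: "a * p2 = l2 + (- \<xi>0 * eta p2)" using s2 by (simp add: algebra_simps)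
    have "Im (a * p2) = Im (- \<xi>0 * eta p2)" unfolding A by (simp add: l2_def)
    thus ?thesis by (simp only: v_eta)
  qed
  show ?thesis using ell ev im1 im2 by blast
qed

end
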